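(* Let $r\geq 1$ be an integer. There exists $n_0$ such that for every $n\geq n_0$ with $(r+1)\mid n$, the following holds, where $F = \frac{n}{r+1}K_{r+1}$ is the disjoint union of $n/(r+1)$ copies of $K_{r+1}$: if $G$ is an $n$-vertex graph not containing $F$ as a subgraph, then $\lambda(G) \leq \lambda(H_{n,r})$, with equality if and only if $G \cong H_{n,r}$.
   Context: All graphs are finite and simple. $\lambda(G)$ denotes the largest eigenvalue of the adjacency matrix of $G$. For integers $n>m\geq 1$, $H_{n,m} = K_{m-1} \vee (K_{n-m} \cup K_1)$, i.e. an $(n-1)$-clique plus one vertex adjacent to exactly $m-1$ vertices of the clique ($\vee$ is the join, $\cup$ the disjoint union). *)

theory Defs
  imports "Jordan_Normal_Form.Char_Poly"
begin

definition simple_graph :: "nat \<Rightarrow> (nat \<Rightarrow> nat \<Rightarrow> bool) \<Rightarrow> bool" where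
  "simple_graph n E \<longleftrightarrow> (\<forall>i j. E i j \<longrightarrow> E j i) \<and> (\<forall>i. \<not> E i i)
      \<and> (\<forall>i j. E i j \<longrightarrow> i < n \<and> j < n)"

definition adj_mat :: "nat \<Rightarrow> (nat \<Rightarrow> nat \<Rightarrow> bool) \<Rightarrow> real mat" where
  "adj_mat n E = mat n n (\<lambda>(i, j). if E i j then 1 else 0)"

definition lambda_max :: "nat \<Rightarrow> (nat \<Rightarrow> nat \<Rightarrow> bool) \<Rightarrow> real" where
  "lambda_max n E = Max {\<mu>. eigenvalue (adj_mat n E) \<mu>}"

definition contains_subgraph ::
  "nat \<Rightarrow> (nat \<Rightarrow> nat \<Rightarrow> bool) \<Rightarrow> nat \<Rightarrow> (nat \<Rightarrow> nat \<Rightarrow> bool) \<Rightarrow> bool" where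
  "contains_subgraph n G m F \<longleftrightarrow>
     (\<exists>f. inj_on f {..<m} \<and> f ` {..<m} \<subseteq> {..<n}
          \<and> (\<forall>i<m. \<forall>j<m. F i j \<longrightarrow> G (f i) (f j)))"

definition graph_iso :: "nat \<Rightarrow> (nat \<Rightarrow> nat \<Rightarrow> bool) \<Rightarrow> (nat \<Rightarrow> nat \<Rightarrow> bool) \<Rightarrow> bool" where
  "graph_iso n G H \<longleftrightarrow>
     (\<exists>f. bij_betw f {..<n} {..<n} \<and> (\<forall>i<n. \<forall>j<n. G i j \<longleftrightarrow> H (f i) (f j)))"

text \<open>t K_s: disjoint union of t copies of K_s on vertices {0..<t*s}; vertices i, j are
  adjacent iff distinct and in the same block of size s.\<close>
definition disjoint_cliques :: "nat \<Rightarrow> nat \<Rightarrow> nat \<Rightarrow> nat \<Rightarrow> bool" where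
  "disjoint_cliques t s i j \<longleftrightarrow> i < t * s \<and> j < t * s \<and> i \<noteq> j \<and> i div s = j div s"

text \<open>H_{n,m} = K_{m-1} join (K_{n-m} union K_1): vertices 0..n-2 form a clique,
  vertex n-1 is adjacent exactly to vertices 0..m-2.\<close>
definition H_graph :: "nat \<Rightarrow> nat \<Rightarrow> nat \<Rightarrow> nat \<Rightarrow> bool" where
  "H_graph n m i j \<longleftrightarrow> i < n \<and> j < n \<and> i \<noteq> j \<and>
     ((i < n - 1 \<and> j < n - 1) \<or> (i = n - 1 \<and> j < m - 1) \<or> (j = n - 1 \<and> i < m - 1))"

end

theory Submission
  imports Defs
begin

definition nsum :: "nat \<Rightarrow> (nat \<Rightarrow> nat \<Rightarrow> bool) \<Rightarrow> (nat \<Rightarrow> 'a::comm_monoid_add) \<Rightarrow> nat \<Rightarrow> 'a" where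
  "nsum n E z i = (\<Sum>j<n. if E i j then z j else 0)"

lemma adj_mat_carrier[simp]: "adj_mat n E \<in> carrier_mat n n"
  by (simp add: adj_mat_def)

lemma mult_gen_mat:
  fixes v :: "'a::field vec"
  assumes "v \<in> carrier_vec n" "i < n"
  shows "(mat n n (\<lambda>(i,j). if E i j then 1 else 0) *\<^sub>v v) $ i = nsum n E (\<lambda>j. v $ j) i"
  using assms unfolding nsum_def
  by (auto simp: scalar_prod_def lessThan_atLeast0 intro!: sum.cong)

lemma mult_adj:
  assumes "v \<in> carrier_vec n" "i < n"
  shows "(adj_mat n E *\<^sub>v v) $ i = nsum n E (\<lambda>j. v $ j) i"
  unfolding adj_mat_def by (rule mult_gen_mat[OF assms])

lemma map_adj: "map_mat complex_of_real (adj_mat n E) = mat n n (\<lambda>(i,j). if E i j then 1 else 0)"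
  by (rule eq_matI) (auto simp: adj_mat_def)

lemma simple_sym: "simple_graph n E \<Longrightarrow> E i j = E j i"
  unfolding simple_graph_def by blast

lemma real_eigenvalue_exists:
  assumes sg: "simple_graph n E" and n: "n > 0"
  shows "\<exists>\<mu>. eigenvalue (adj_mat n E) \<mu>"
proof -
  let ?A = "adj_mat n E"
  let ?Ac = "map_mat complex_of_real ?A"
  have Ac: "?Ac \<in> carrier_mat n n" by simp
  have cp: "char_poly ?Ac = map_poly complex_of_real (char_poly ?A)"
    by (rule of_real_hom.char_poly_hom[of _ n]) simp
  have "degree (char_poly ?Ac) = n" using degree_monic_char_poly[OF Ac] by simp
  hence "\<not> constant (poly (char_poly ?Ac))" using n
    by (metis constant_degree neq0_conv)
  then obtain c where c: "poly (char_poly ?Ac) c = 0" using fundamental_theorem_of_algebra by blast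
  hence "eigenvalue ?Ac c" using eigenvalue_root_char_poly[OF Ac] by simp
  then obtain v where v: "v \<in> carrier_vec n" "v \<noteq> 0\<^sub>v n" "?Ac *\<^sub>v v = c \<cdot>\<^sub>v v"
    unfolding eigenvalue_def eigenvector_def by (auto simp: adj_mat_def)
  have eq: "nsum n E (\<lambda>j. v $ j) i = c * v $ i" if "i < n" for i
  proof -
    have "(?Ac *\<^sub>v v) $ i = c * v $ i" using v that by simp
    thus ?thesis unfolding map_adj using mult_gen_mat[OF v(1) that] by simp
  qed
  define q where "q = (\<Sum>i<n. cnj (v $ i) * nsum n E (\<lambda>j. v $ j) i)"
  define N where "N = (\<Sum>i<n. (cmod (v $ i))^2)"
  have q1: "q = c * of_real N"
  proof -
    have "q = (\<Sum>i<n. c * (cnj (v $ i) * v $ i))" unfolding q_def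
      by (rule sum.cong) (auto simp: eq)
    also have "\<dots> = c * (\<Sum>i<n. cnj (v $ i) * v $ i)" by (simp add: sum_distrib_left)
    also have "(\<Sum>i<n. cnj (v $ i) * v $ i) = of_real N" unfolding N_def of_real_sum
      by (rule sum.cong) (auto simp: complex_norm_square[symmetric] mult.commute)
    finally show ?thesis .
  qed
  have "cnj q = (\<Sum>i<n. \<Sum>j<n. if E i j then v $ i * cnj (v $ j) else 0)"
    unfolding q_def nsum_def by (simp add: sum_distrib_left if_distrib cong: if_cong)
  also have "\<dots> = (\<Sum>j<n. \<Sum>i<n. if E i j then v $ i * cnj (v $ j) else 0)"
    by (rule sum.swap)
  also have "\<dots> = q" unfolding q_def nsum_def sum_distrib_left
    by (rule sum.cong[OF refl], rule sum.cong[OF refl]) (auto simp: simple_sym[OF sg])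
  finally have qr: "cnj q = q" .
  have "N > 0"
  proof -
    obtain i where i: "i < n" "v $ i \<noteq> 0" using v(1,2) by (metis eq_vecI carrier_vecD index_zero_vec)
    have "(cmod (v $ i))^2 > 0" using i by simp
    moreover have "(cmod (v $ i))^2 \<le> N" unfolding N_def
      by (rule member_le_sum) (use i in auto)
    ultimately show ?thesis by linarith
  qed
  have "c = q / of_real N" using q1 \<open>N > 0\<close> by simp
  hence "cnj c = c" using qr by (simp add: complex_cnj_divide)
  hence cr: "c = of_real (Re c)" by (metis Reals_cnj_iff complex_is_Real_iff of_real_Re)
  have "complex_of_real (poly (char_poly ?A) (Re c)) = 0"
    using c unfolding cp by (subst (asm) cr) (simp add: of_real_hom.poly_map_poly)
  hence "poly (char_poly ?A) (Re c) = 0" by simp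
  thus ?thesis using eigenvalue_root_char_poly[of ?A n] by auto
qed

lemma eigenvalues_finite: "finite {\<mu>. eigenvalue (adj_mat n E) \<mu>}"
proof -
  have "char_poly (adj_mat n E) \<noteq> 0"
    using degree_monic_char_poly[of "adj_mat n E" n] by auto
  hence "finite {\<mu>. poly (char_poly (adj_mat n E)) \<mu> = 0}" by (rule poly_roots_finite)
  thus ?thesis using eigenvalue_root_char_poly[of "adj_mat n E" n] by simp
qed

lemma lambda_max_props:
  assumes "simple_graph n E" "n > 0"
  shows "eigenvalue (adj_mat n E) (lambda_max n E)"
    "\<And>\<mu>. eigenvalue (adj_mat n E) \<mu> \<Longrightarrow> \<mu> \<le> lambda_max n E"
proof -
  have ne: "{\<mu>. eigenvalue (adj_mat n E) \<mu>} \<noteq> {}" using real_eigenvalue_exists[OF assms] by auto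
  show "eigenvalue (adj_mat n E) (lambda_max n E)" unfolding lambda_max_def
    using Max_in[OF eigenvalues_finite ne] by simp
  show "\<And>\<mu>. eigenvalue (adj_mat n E) \<mu> \<Longrightarrow> \<mu> \<le> lambda_max n E" unfolding lambda_max_def
    using Max_ge[OF eigenvalues_finite] by simp
qed

lemma ev_vec:
  assumes ev: "eigenvalue (adj_mat n E) \<mu>"
  shows "\<exists>y. (\<forall>i<n. 0 \<le> y i \<and> y i \<le> 1) \<and> (\<exists>i<n. y i = 1) \<and> (\<forall>i<n. \<bar>\<mu>\<bar> * y i \<le> nsum n E y i)"
proof -
  obtain v where v: "v \<in> carrier_vec n" "v \<noteq> 0\<^sub>v n" "adj_mat n E *\<^sub>v v = \<mu> \<cdot>\<^sub>v v"
    using ev unfolding eigenvalue_def eigenvector_def by (auto simp: adj_mat_def)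
  have n: "n > 0" using eigenvalue_imp_nonzero_dim[OF adj_mat_carrier ev] .
  obtain i0 where i0: "i0 < n" "v $ i0 \<noteq> 0" using v(1,2) by (metis eq_vecI carrier_vecD index_zero_vec)
  define M where "M = Max ((\<lambda>i. \<bar>v $ i\<bar>) ` {..<n})"
  have Mge: "\<bar>v $ i\<bar> \<le> M" if "i < n" for i unfolding M_def by (rule Max_ge) (use that in auto)
  obtain im where im: "im < n" "\<bar>v $ im\<bar> = M" unfolding M_def
    using Max_in[of "(\<lambda>i. \<bar>v $ i\<bar>) ` {..<n}"] n by fastforce
  have Mpos: "M > 0" using Mge[OF i0(1)] i0(2) by linarith
  define y where "y i = \<bar>v $ i\<bar> / M" for i
  have key: "\<bar>\<mu>\<bar> * \<bar>v $ i\<bar> \<le> nsum n E (\<lambda>j. \<bar>v $ j\<bar>) i" if "i < n" for i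
  proof -
    have "nsum n E (\<lambda>j. v $ j) i = \<mu> * v $ i"
      using mult_adj[OF v(1) that, of E] v(3) that v(1) by simp
    hence "\<bar>\<mu>\<bar> * \<bar>v $ i\<bar> = \<bar>nsum n E (\<lambda>j. v $ j) i\<bar>" by (simp add: abs_mult)
    also have "\<dots> \<le> (\<Sum>j<n. \<bar>if E i j then v $ j else 0\<bar>)" unfolding nsum_def by (rule sum_abs)
    also have "\<dots> = nsum n E (\<lambda>j. \<bar>v $ j\<bar>) i" unfolding nsum_def by (rule sum.cong) auto
    finally show ?thesis .
  qed
  have A: "\<forall>i<n. 0 \<le> y i \<and> y i \<le> 1" unfolding y_def using Mpos Mge by auto
  have B: "\<exists>i<n. y i = 1" using im Mpos unfolding y_def by auto
  have C: "\<forall>i<n. \<bar>\<mu>\<bar> * y i \<le> nsum n E y i"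
  proof (intro allI impI)
    fix i assume i: "i < n"
    have "\<bar>\<mu>\<bar> * y i = (\<bar>\<mu>\<bar> * \<bar>v $ i\<bar>) / M" unfolding y_def by simp
    also have "\<dots> \<le> nsum n E (\<lambda>j. \<bar>v $ j\<bar>) i / M" using key[OF i] Mpos by (simp add: divide_right_mono)
    also have "\<dots> = nsum n E y i" unfolding nsum_def y_def sum_divide_distrib
      by (rule sum.cong) auto
    finally show "\<bar>\<mu>\<bar> * y i \<le> nsum n E y i" .
  qed
  show ?thesis using A B C by blast
qed

lemma nsum_swap:
  fixes z y :: "nat \<Rightarrow> real"
  assumes sg: "simple_graph n E"
  shows "(\<Sum>i<n. z i * nsum n E y i) = (\<Sum>j<n. y j * nsum n E z j)"
proof -
  have "(\<Sum>i<n. z i * nsum n E y i) = (\<Sum>i<n. \<Sum>j<n. if E i j then z i * y j else 0)"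
    unfolding nsum_def sum_distrib_left by (rule sum.cong[OF refl], rule sum.cong[OF refl]) simp
  also have "\<dots> = (\<Sum>j<n. \<Sum>i<n. if E i j then z i * y j else 0)" by (rule sum.swap)
  also have "\<dots> = (\<Sum>j<n. y j * nsum n E z j)"
    unfolding nsum_def sum_distrib_left
    by (rule sum.cong[OF refl], rule sum.cong[OF refl]) (auto simp: simple_sym[OF sg])
  finally show ?thesis .
qed

lemma collatz_upper:
  fixes z :: "nat \<Rightarrow> real"
  assumes sg: "simple_graph n E"
    and zpos: "\<And>i. i < n \<Longrightarrow> 0 < z i"
    and zlt: "\<And>i. i < n \<Longrightarrow> nsum n E z i < c * z i"
    and ev: "eigenvalue (adj_mat n E) \<mu>"
  shows "\<mu> < c"
proof -
  obtain y where y: "\<forall>i<n. 0 \<le> y i \<and> y i \<le> 1" "\<exists>i<n. y i = 1" "\<forall>i<n. \<bar>\<mu>\<bar> * y i \<le> nsum n E y i"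
    using ev_vec[OF ev] by blast
  obtain k where k: "k < n" "y k = 1" using y(2) by blast
  define S where "S = (\<Sum>i<n. z i * y i)"
  have Spos: "S > 0"
  proof -
    have "z k * y k > 0" using zpos[OF k(1)] k by simp
    moreover have "z k * y k \<le> S" unfolding S_def
    proof (rule member_le_sum)
      fix i assume "i \<in> {..<n} - {k}"
      hence "i < n" by simp
      thus "0 \<le> z i * y i" using zpos y(1) by (metis less_imp_le mult_nonneg_nonneg)
    qed (use k in auto)
    ultimately show ?thesis by linarith
  qed
  have "\<bar>\<mu>\<bar> * S = (\<Sum>i<n. z i * (\<bar>\<mu>\<bar> * y i))" unfolding S_def sum_distrib_left by (simp add: ac_simps)
  also have "\<dots> \<le> (\<Sum>i<n. z i * nsum n E y i)"
    by (rule sum_mono) (use y(3) zpos in \<open>auto intro!: mult_left_mono less_imp_le\<close>)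
  also have "\<dots> = (\<Sum>j<n. y j * nsum n E z j)" by (rule nsum_swap[OF sg])
  also have "\<dots> < (\<Sum>j<n. y j * (c * z j))"
  proof (rule sum_strict_mono_ex1)
    show "\<forall>j\<in>{..<n}. y j * nsum n E z j \<le> y j * (c * z j)"
    proof
      fix j assume "j \<in> {..<n}"
      hence "j < n" by simp
      thus "y j * nsum n E z j \<le> y j * (c * z j)" using y(1) zlt[of j] by (simp add: mult_left_mono)
    qed
    show "\<exists>j\<in>{..<n}. y j * nsum n E z j < y j * (c * z j)"
      using k zlt[OF k(1)] by (intro bexI[of _ k]) auto
  qed simp
  also have "\<dots> = c * S" unfolding S_def sum_distrib_left by (simp add: ac_simps)
  finally have "\<bar>\<mu>\<bar> * S < c * S" .
  hence "\<bar>\<mu>\<bar> < c" using Spos by simp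
  thus ?thesis by simp
qed

lemma iso_eig_one:
  assumes f: "bij_betw f {..<n} {..<n}" and GH: "\<And>i j. i < n \<Longrightarrow> j < n \<Longrightarrow> G i j \<longleftrightarrow> H (f i) (f j)"
    and ev: "eigenvalue (adj_mat n H) \<mu>"
  shows "eigenvalue (adj_mat n G) \<mu>"
proof -
  obtain v where v: "v \<in> carrier_vec n" "v \<noteq> 0\<^sub>v n" "adj_mat n H *\<^sub>v v = \<mu> \<cdot>\<^sub>v v"
    using ev unfolding eigenvalue_def eigenvector_def by (auto simp: adj_mat_def)
  obtain k where k: "k < n" "v $ k \<noteq> 0" using v(1,2) by (metis eq_vecI carrier_vecD index_zero_vec)
  have "k \<in> f ` {..<n}" using f k(1) by (simp add: bij_betw_def)
  then obtain i where i: "i < n" "f i = k" by auto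
  define w where "w = vec n (\<lambda>i. v $ f i)"
  have w: "w \<in> carrier_vec n" unfolding w_def by simp
  have "w $ i \<noteq> 0" unfolding w_def using i k by simp
  hence wnz: "w \<noteq> 0\<^sub>v n" using i by auto
  have "adj_mat n G *\<^sub>v w = \<mu> \<cdot>\<^sub>v w"
  proof (rule eq_vecI)
    fix a assume a: "a < dim_vec (\<mu> \<cdot>\<^sub>v w)"
    hence a: "a < n" using w by simp
    have fa: "f a < n" using f a by (auto simp: bij_betw_def)
    have "(adj_mat n G *\<^sub>v w) $ a = nsum n G (\<lambda>j. w $ j) a" by (rule mult_adj[OF w a])
    also have "\<dots> = (\<Sum>j<n. if H (f a) (f j) then v $ f j else 0)"
      unfolding nsum_def w_def by (rule sum.cong[OF refl]) (simp add: GH a)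
    also have "\<dots> = (\<Sum>k<n. if H (f a) k then v $ k else 0)"
      by (rule sum.reindex_bij_betw[OF f, where g = "\<lambda>k. if H (f a) k then v $ k else 0"])
    also have "\<dots> = (adj_mat n H *\<^sub>v v) $ f a" using mult_adj[OF v(1) fa] unfolding nsum_def by simp
    also have "\<dots> = \<mu> * v $ f a" using v fa by simp
    finally show "(adj_mat n G *\<^sub>v w) $ a = (\<mu> \<cdot>\<^sub>v w) $ a" using a w unfolding w_def by simp
  qed (use w in \<open>simp add: adj_mat_def\<close>)
  thus ?thesis unfolding eigenvalue_def eigenvector_def using w wnz by (auto simp: adj_mat_def)
qed

lemma iso_lambda:
  assumes "graph_iso n G H"
  shows "lambda_max n G = lambda_max n H"
proof -
  obtain f where f: "bij_betw f {..<n} {..<n}" and GH: "\<forall>i<n. \<forall>j<n. G i j \<longleftrightarrow> H (f i) (f j)"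
    using assms unfolding graph_iso_def by blast
  define g where "g = inv_into {..<n} f"
  have g: "bij_betw g {..<n} {..<n}" unfolding g_def by (rule bij_betw_inv_into[OF f])
  have fg: "f (g k) = k" if "k < n" for k unfolding g_def using f that
    by (simp add: bij_betw_inv_into_right)
  have GH': "G i j \<longleftrightarrow> H (f i) (f j)" if "i < n" "j < n" for i j using GH that by blast
  have HG: "H i j \<longleftrightarrow> G (g i) (g j)" if "i < n" "j < n" for i j
  proof -
    have gi: "g i < n" "g j < n" using g that by (auto simp: bij_betw_def)
    have "H i j = H (f (g i)) (f (g j))" using fg that by simp
    also have "\<dots> = G (g i) (g j)" using GH'[OF gi] by simp
    finally show ?thesis .
  qed
  have 1: "eigenvalue (adj_mat n G) \<mu>" if "eigenvalue (adj_mat n H) \<mu>" for \<mu>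
    using iso_eig_one[OF f GH' that] .
  have 2: "eigenvalue (adj_mat n H) \<mu>" if "eigenvalue (adj_mat n G) \<mu>" for \<mu>
    using iso_eig_one[OF g HG that] .
  have "{\<mu>. eigenvalue (adj_mat n G) \<mu>} = {\<mu>. eigenvalue (adj_mat n H) \<mu>}"
    using 1 2 by auto
  thus ?thesis unfolding lambda_max_def by simp
qed

lemma nsum_set: "nsum n E z i = sum z {j. j < n \<and> E i j}"
proof -
  have "sum z {j. j < n \<and> E i j} = sum z {j \<in> {..<n}. E i j}" by (rule arg_cong[where f="sum z"]) auto
  also have "\<dots> = (\<Sum>j<n. if E i j then z j else 0)" by (rule sum.inter_filter) simp
  finally show ?thesis unfolding nsum_def by simp
qed

lemma sum_split_at:
  fixes m n :: nat
  assumes "m \<le> n"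
  shows "(\<Sum>j<n. f j) = (\<Sum>j<m. f j) + (\<Sum>j\<in>{m..<n}. f j)"
  using sum.atLeastLessThan_concat[of 0 m n f] assms by (simp add: lessThan_atLeast0)

lemma H_nbrs_last:
  assumes "r \<le> n" "n \<ge> 1"
  shows "{j. j < n \<and> H_graph n r (n-1) j} = {..<r-1}"
  using assms unfolding H_graph_def by auto

lemma H_nbrs_low:
  assumes "i < r - 1" "r \<le> n"
  shows "{j. j < n \<and> H_graph n r i j} = {..<n} - {i}"
  using assms unfolding H_graph_def by auto

lemma H_nbrs_mid:
  assumes "r - 1 \<le> i" "i < n - 1"
  shows "{j. j < n \<and> H_graph n r i j} = {..<n-1} - {i}"
  using assms unfolding H_graph_def by auto

lemma eigI:
  fixes v :: "nat \<Rightarrow> real"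
  assumes "\<And>i. i < n \<Longrightarrow> nsum n E v i = \<mu> * v i" "k < n" "v k \<noteq> 0"
  shows "eigenvalue (adj_mat n E) \<mu>"
proof -
  define w where "w = vec n v"
  have w: "w \<in> carrier_vec n" unfolding w_def by simp
  have "w $ k \<noteq> 0" using assms(2,3) unfolding w_def by simp
  hence wnz: "w \<noteq> 0\<^sub>v n" using assms(2) by auto
  have "adj_mat n E *\<^sub>v w = \<mu> \<cdot>\<^sub>v w"
  proof (rule eq_vecI)
    fix a assume "a < dim_vec (\<mu> \<cdot>\<^sub>v w)"
    hence a: "a < n" using w by simp
    have "(adj_mat n E *\<^sub>v w) $ a = nsum n E (\<lambda>j. w $ j) a" by (rule mult_adj[OF w a])
    also have "\<dots> = nsum n E v a" unfolding nsum_def w_def by (rule sum.cong) auto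
    finally show "(adj_mat n E *\<^sub>v w) $ a = (\<mu> \<cdot>\<^sub>v w) $ a" using assms(1)[OF a] a w unfolding w_def by simp
  qed (use w in \<open>simp add: adj_mat_def\<close>)
  thus ?thesis unfolding eigenvalue_def eigenvector_def using w wnz by (auto simp: adj_mat_def)
qed

lemma H_eig1:
  assumes "n \<ge> 2"
  shows "eigenvalue (adj_mat n (H_graph n 1)) (real n - 2)"
proof (rule eigI[of n _ "\<lambda>i. if i < n - 1 then 1 else 0" _ 0])
  fix i assume i: "i < n"
  show "nsum n (H_graph n 1) (\<lambda>i. if i < n - 1 then 1 else 0) i = (real n - 2) * (if i < n - 1 then 1 else 0)"
  proof (cases "i < n - 1")
    case True
    have "nsum n (H_graph n 1) (\<lambda>i. if i < n - 1 then 1 else (0::real)) i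
        = sum (\<lambda>i. if i < n - 1 then 1 else (0::real)) ({..<n-1} - {i})"
      unfolding nsum_set by (subst H_nbrs_mid) (use True in auto)
    also have "\<dots> = sum (\<lambda>i. 1) ({..<n-1} - {i})" by (rule sum.cong) auto
    also have "\<dots> = real n - 2" using True assms by (simp add: of_nat_diff)
    finally show ?thesis using True by simp
  next
    case False
    hence ii: "i = n - 1" using i by simp
    have e: "{j. j < n \<and> H_graph n 1 (n-1) j} = {}" using H_nbrs_last[of 1 n] assms by simp
    show ?thesis unfolding nsum_set ii e by simp
  qed
qed (use assms in auto)

lemma H_eig2:
  assumes r: "r \<ge> 2" and n: "n \<ge> r + 2"
  shows "\<exists>\<mu> x b. eigenvalue (adj_mat n (H_graph n r)) \<mu> \<and> real n - 2 < \<mu> \<and> \<mu> * x = real r - 1 \<and>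
     \<mu> * b = (real r - 1) + (real n - real r - 1) * b \<and> \<mu> = x + (real r - 2) + (real n - real r) * b \<and>
     0 < x \<and> 0 < b \<and> b < 1"
proof -
  define R where "R = real r"
  define N where "N = real n"
  have R2: "R \<ge> 2" using r unfolding R_def by simp
  have NR: "N \<ge> R + 2" using n unfolding R_def N_def by simp
  define p where "p m = (R-1)*(m-N+R+1) + (R-2)*m*(m-N+R+1) + (N-R)*(R-1)*m - m^2*(m-N+R+1)" for m
  have p1: "p (N-2) = (R-1)^2" unfolding p_def by (simp add: algebra_simps power2_eq_square)
  have p2: "p (N-1) = R*(R-1) - N*(N-1)" unfolding p_def by (simp add: algebra_simps power2_eq_square)
  have "N*(N-1) > R*(R-1)" using NR R2 by (intro mult_strict_mono) auto
  hence p2n: "p (N-1) \<le> 0" using p2 by simp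
  have p1p: "0 < p (N-2)" using p1 R2 by simp
  have cont: "\<forall>m. N-2 \<le> m \<and> m \<le> N-1 \<longrightarrow> isCont p m" unfolding p_def by (intro allI impI continuous_intros)
  obtain \<mu> where mu: "N-2 \<le> \<mu>" "\<mu> \<le> N-1" "p \<mu> = 0"
    using IVT2[of p "N-1" 0 "N-2", OF p2n less_imp_le[OF p1p] _ cont] by auto
  have mugt: "\<mu> > N-2" using mu p1p by (cases "\<mu> = N-2") auto
  define c where "c = \<mu> - N + R + 1"
  have cgt: "c > R - 1" using mugt unfolding c_def by simp
  have cpos: "c > 0" using cgt R2 by simp
  have mupos: "\<mu> > 0" using mugt NR R2 by simp
  define x where "x = (R-1)/\<mu>"
  define b where "b = (R-1)/c"
  have ex: "\<mu> * x = R - 1" unfolding x_def using mupos by simp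
  have eb: "\<mu> * b = (R - 1) + (N - R - 1) * b"
  proof -
    have "b * c = R - 1" unfolding b_def using cpos by simp
    thus ?thesis unfolding c_def by (simp add: algebra_simps)
  qed
  have ea: "\<mu> = x + (R - 2) + (N - R) * b"
  proof -
    have "\<mu> * c * \<mu> = (R-1)*c + (R-2)*\<mu>*c + (N-R)*(R-1)*\<mu>" using mu(3) unfolding p_def c_def
      by (simp add: algebra_simps power2_eq_square)
    hence "\<mu> = (R-1)/\<mu> + (R-2) + (N-R)*((R-1)/c)" using mupos cpos
      by (simp add: field_simps)
    thus ?thesis unfolding x_def b_def by simp
  qed
  have xpos: "x > 0" unfolding x_def using mupos R2 by simp
  have bpos: "b > 0" unfolding b_def using cpos R2 by simp
  have blt: "b < 1" unfolding b_def using cgt cpos by simp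
  define vf where "vf i = (if i = n - 1 then x else if i < r - 1 then 1 else b)" for i
  have sum1: "(\<Sum>j<n-1. vf j) = (R-1) + (N-R) * b"
  proof -
    have "(\<Sum>j<n-1. vf j) = (\<Sum>j<r-1. vf j) + (\<Sum>j\<in>{r-1..<n-1}. vf j)"
      by (rule sum_split_at) (use n in simp)
    also have "(\<Sum>j<r-1. vf j) = (\<Sum>j<r-1. 1)" by (rule sum.cong) (use n in \<open>auto simp: vf_def\<close>)
    also have "(\<Sum>j\<in>{r-1..<n-1}. vf j) = (\<Sum>j\<in>{r-1..<n-1}. b)" by (rule sum.cong) (auto simp: vf_def)
    finally show ?thesis using n r unfolding R_def N_def by (simp add: of_nat_diff)
  qed
  have sum2: "(\<Sum>j<n. vf j) = (R-1) + (N-R) * b + x"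
  proof -
    have "n = Suc (n-1)" using n by simp
    hence "(\<Sum>j<n. vf j) = (\<Sum>j<n-1. vf j) + vf (n-1)" by (metis sum.lessThan_Suc)
    thus ?thesis using sum1 by (simp add: vf_def)
  qed
  have eig: "eigenvalue (adj_mat n (H_graph n r)) \<mu>"
  proof (rule eigI[of n _ vf _ 0])
    fix i assume i: "i < n"
    consider "i = n - 1" | "i < r - 1" | "r - 1 \<le> i" "i < n - 1" using i by linarith
    thus "nsum n (H_graph n r) vf i = \<mu> * vf i"
    proof cases
      case 1
      have "nsum n (H_graph n r) vf i = (\<Sum>j<r-1. vf j)" unfolding nsum_set 1
        by (subst H_nbrs_last) (use n in auto)
      also have "\<dots> = (\<Sum>j<r-1. 1)" by (rule sum.cong) (use n in \<open>auto simp: vf_def\<close>)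
      finally show ?thesis using 1 ex r unfolding R_def by (simp add: vf_def of_nat_diff)
    next
      case 2
      have "nsum n (H_graph n r) vf i = sum vf ({..<n} - {i})" unfolding nsum_set
        by (subst H_nbrs_low) (use n 2 in auto)
      also have "\<dots> = (\<Sum>j<n. vf j) - vf i" using i by (simp add: sum_diff1)
      moreover have "i \<noteq> n - 1" using 2 n by simp
      ultimately show ?thesis using 2 sum2 ea n by (simp add: vf_def)
    next
      case 3
      have "nsum n (H_graph n r) vf i = sum vf ({..<n-1} - {i})" unfolding nsum_set
        by (subst H_nbrs_mid) (use 3 in auto)
      also have "\<dots> = (\<Sum>j<n-1. vf j) - vf i" using 3 by (simp add: sum_diff1)
      finally show ?thesis using 3 sum1 eb n by (simp add: vf_def algebra_simps)
    qed
  qed (use n r in \<open>auto simp: vf_def\<close>)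
  show ?thesis
    by (rule exI[of _ \<mu>], rule exI[of _ x], rule exI[of _ b])
       (use eig mugt ex eb ea xpos bpos blt in \<open>simp add: R_def N_def\<close>)
qed

lemma lambda_ge: "eigenvalue (adj_mat n E) \<mu> \<Longrightarrow> \<mu> \<le> lambda_max n E"
  unfolding lambda_max_def using Max_ge[OF eigenvalues_finite] by simp

lemma lambda_H_ge:
  assumes "r \<ge> 1" "n \<ge> r + 2"
  shows "real n - 2 \<le> lambda_max n (H_graph n r)"
proof (cases "r = 1")
  case True
  thus ?thesis using lambda_ge[OF H_eig1] assms by simp
next
  case False
  then obtain \<mu> where "eigenvalue (adj_mat n (H_graph n r)) \<mu>" "real n - 2 < \<mu>"
    using H_eig2[of r n] assms by auto
  thus ?thesis using lambda_ge by force
qed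

definition nb :: "nat \<Rightarrow> (nat \<Rightarrow> nat \<Rightarrow> bool) \<Rightarrow> nat \<Rightarrow> nat set" where
  "nb n E v = {w. w < n \<and> E v w}"
definition deg :: "nat \<Rightarrow> (nat \<Rightarrow> nat \<Rightarrow> bool) \<Rightarrow> nat \<Rightarrow> nat" where
  "deg n E v = card (nb n E v)"
definition nn :: "nat \<Rightarrow> (nat \<Rightarrow> nat \<Rightarrow> bool) \<Rightarrow> nat \<Rightarrow> nat set" where
  "nn n E v = {w. w < n \<and> w \<noteq> v \<and> \<not> E v w}"

lemma finite_nb[simp]: "finite (nb n E v)" unfolding nb_def by simp
lemma finite_nn[simp]: "finite (nn n E v)" unfolding nn_def by simp

lemma deg_nn:
  assumes sg: "simple_graph n E" and v: "v < n"
  shows "deg n E v + card (nn n E v) = n - 1"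
proof -
  have "nb n E v \<union> nn n E v = {..<n} - {v}" using sg unfolding nb_def nn_def simple_graph_def by auto
  moreover have "nb n E v \<inter> nn n E v = {}" unfolding nb_def nn_def by auto
  ultimately have "card (nb n E v) + card (nn n E v) = card ({..<n} - {v})"
    by (metis card_Un_disjoint finite_nb finite_nn)
  thus ?thesis using v unfolding deg_def by simp
qed

lemma nsum_le_deg:
  fixes y :: "nat \<Rightarrow> real"
  assumes "\<forall>i<n. y i \<le> 1"
  shows "nsum n E y v \<le> deg n E v"
proof -
  have "nsum n E y v = sum y (nb n E v)" unfolding nsum_set nb_def ..
  also have "\<dots> \<le> sum (\<lambda>_. 1) (nb n E v)" by (rule sum_mono) (use assms in \<open>auto simp: nb_def\<close>)
  finally show ?thesis unfolding deg_def by simp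
qed

lemma nsum_le_others:
  fixes y :: "nat \<Rightarrow> real"
  assumes sg: "simple_graph n E" and "\<forall>i<n. 0 \<le> y i"
  shows "nsum n E y v \<le> sum y ({..<n} - {v})"
proof -
  have "nsum n E y v = sum y (nb n E v)" unfolding nsum_set nb_def ..
  also have "\<dots> \<le> sum y ({..<n} - {v})"
    by (rule sum_mono2) (use assms in \<open>auto simp: nb_def simple_graph_def\<close>)
  finally show ?thesis .
qed

lemma real_le_pred:
  assumes "a \<le> n - 1" "1 \<le> n"
  shows "real a \<le> real n - 1"
proof -
  have "real a \<le> real (n - 1)" using assms(1) by simp
  thus ?thesis using assms(2) by (simp add: of_nat_diff)
qed

lemma lemmaU:
  assumes sg: "simple_graph n E" and ev: "eigenvalue (adj_mat n E) \<mu>"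
    and mu: "real n - 2 \<le> \<mu>" and n: "n \<ge> 6"
  shows "\<not> (\<exists>u w. u < n \<and> w < n \<and> u \<noteq> w \<and> 4 * deg n E u < n \<and> 4 * deg n E w < n)"
    and "\<And>D. D \<ge> 2 \<Longrightarrow> card {v. v < n \<and> deg n E v + D \<le> n - 1} * (D - 1) \<le> n - 2"
proof -
  obtain y where y: "\<forall>i<n. 0 \<le> y i \<and> y i \<le> 1" "\<exists>i<n. y i = 1" "\<forall>i<n. \<bar>\<mu>\<bar> * y i \<le> nsum n E y i"
    using ev_vec[OF ev] by blast
  have mupos: "\<mu> > 0" using mu n by simp
  obtain z0 where z0: "z0 < n" "y z0 = 1" using y(2) by blast
  have yle: "\<mu> * y v \<le> deg n E v" if "v < n" for v
    using y(3) that nsum_le_deg[of n y E v] y(1) mupos by fastforce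
  have degz: "real (deg n E z0) \<ge> \<mu>" using yle[OF z0(1)] z0 by simp
  have S: "sum (\<lambda>j. 1 - y j) ({..<n} - {z0}) \<le> 1"
  proof -
    have "\<mu> \<le> nsum n E y z0" using y(3) z0 mupos by fastforce
    also have "\<dots> \<le> sum y ({..<n} - {z0})" by (rule nsum_le_others[OF sg]) (use y(1) in auto)
    finally have "\<mu> \<le> sum y ({..<n} - {z0})" .
    moreover have "sum (\<lambda>j. 1 - y j) ({..<n} - {z0}) = real (n - 1) - sum y ({..<n} - {z0})"
      using z0 by (simp add: sum_subtractf)
    ultimately show ?thesis using mu n by (simp add: of_nat_diff)
  qed
  have sub: "sum (\<lambda>j. 1 - y j) A \<le> 1" if "A \<subseteq> {..<n} - {z0}" for A
  proof -
    have "sum (\<lambda>j. 1 - y j) A \<le> sum (\<lambda>j. 1 - y j) ({..<n} - {z0})"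
      by (rule sum_mono2) (use that y(1) in auto)
    thus ?thesis using S by simp
  qed
  show "\<not> (\<exists>u w. u < n \<and> w < n \<and> u \<noteq> w \<and> 4 * deg n E u < n \<and> 4 * deg n E w < n)"
  proof
    assume "\<exists>u w. u < n \<and> w < n \<and> u \<noteq> w \<and> 4 * deg n E u < n \<and> 4 * deg n E w < n"
    then obtain u w where uw: "u < n" "w < n" "u \<noteq> w" "4 * deg n E u < n" "4 * deg n E w < n" by blast
    have small: "y v \<le> 3/8" and nz: "v \<noteq> z0" if "v < n" "4 * deg n E v < n" for v
    proof -
      have "4 * real (deg n E v) \<le> real n - 1" using that(2) by linarith
      moreover have "(real n - 2) * y v \<le> \<mu> * y v" using mu y(1) that(1) by (simp add: mult_right_mono)
      ultimately have "4 * ((real n - 2) * y v) \<le> real n - 1" using yle[OF that(1)] by linarith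
      hence "y v * (4 * (real n - 2)) \<le> real n - 1" by (simp add: algebra_simps)
      moreover have "(real n - 1) \<le> 3/8 * (4 * (real n - 2))" using n by simp
      ultimately have "y v * (4 * (real n - 2)) \<le> 3/8 * (4 * (real n - 2))" by linarith
      moreover have "4 * (real n - 2) > 0" using n by simp
      ultimately show "y v \<le> 3/8" by (meson mult_le_cancel_right_pos)
      show "v \<noteq> z0" using that(2) degz mu n by (auto simp: of_nat_less_iff)
    qed
    have "sum (\<lambda>j. 1 - y j) {u, w} \<le> 1" by (rule sub) (use uw nz in auto)
    moreover have "sum (\<lambda>j. 1 - y j) {u, w} = (1 - y u) + (1 - y w)" using uw by simp
    ultimately show False using small[of u] small[of w] uw by linarith
  qed
  fix D :: nat assume D: "D \<ge> 2"
  define L where "L = {v. v < n \<and> deg n E v + D \<le> n - 1}"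
  have Lsub: "L \<subseteq> {..<n} - {z0}"
  proof
    fix v assume v: "v \<in> L"
    have "v \<noteq> z0"
    proof
      assume "v = z0"
      hence "deg n E z0 + D \<le> n - 1" using v unfolding L_def by simp
      hence "real (deg n E z0 + D) \<le> real n - 1" using n by (intro real_le_pred) auto
      hence "real (deg n E z0) + real D \<le> real n - 1" by simp
      thus False using degz mu D by linarith
    qed
    thus "v \<in> {..<n} - {z0}" using v unfolding L_def by auto
  qed
  have each: "real D - 1 \<le> (real n - 2) * (1 - y v)" if "v \<in> L" for v
  proof -
    have v1: "v < n" "deg n E v + D \<le> n - 1" using that unfolding L_def by auto
    have "real (deg n E v + D) \<le> real n - 1" using v1 n by (intro real_le_pred) auto
    hence v: "v < n" "real (deg n E v) + real D \<le> real n - 1" using v1 by auto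
    have "(real n - 2) * y v \<le> \<mu> * y v" using mu y(1) v(1) by (simp add: mult_right_mono)
    thus ?thesis using yle[OF v(1)] v(2) by (simp add: algebra_simps)
  qed
  have "real (card L) * (real D - 1) = (\<Sum>v\<in>L. real D - 1)" by simp
  also have "\<dots> \<le> (\<Sum>v\<in>L. (real n - 2) * (1 - y v))" by (rule sum_mono) (use each in auto)
  also have "\<dots> = (real n - 2) * sum (\<lambda>j. 1 - y j) L" by (simp add: sum_distrib_left)
  also have "\<dots> \<le> (real n - 2) * 1" using sub[OF Lsub] n by (intro mult_left_mono) auto
  finally have "real (card L) * (real D - 1) \<le> real n - 2" by simp
  hence "real (card L * (D - 1)) \<le> real (n - 2)" using D n by (simp add: of_nat_diff)
  thus "card {v. v < n \<and> deg n E v + D \<le> n - 1} * (D - 1) \<le> n - 2" unfolding L_def of_nat_le_iff .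
qed

lemma sum_indicator:
  fixes c :: real
  assumes "finite S"
  shows "(\<Sum>v\<in>S. if v \<in> A then c else 0) = c * real (card (S \<inter> A))"
proof -
  have "(\<Sum>v\<in>S. if v \<in> A then c else 0) = sum (\<lambda>_. c) (S \<inter> A)"
    using sum.inter_restrict[OF assms, of "\<lambda>_. c" A] by simp
  thus ?thesis by simp
qed

lemma SL_ab:
  fixes n r t :: nat
  assumes sg: "simple_graph n E" and t: "t < n" and r1: "r \<ge> 1"
    and nbig: "n > 2*r*(r+1) + 2*r + 7"
    and dsmall: "4 * deg n E t < n"
    and Wfs: "card {w \<in> nb n E t. \<forall>x<n. x \<noteq> t \<longrightarrow> x \<noteq> w \<longrightarrow> E w x} < r"
    and nonc: "a < n" "b < n" "a \<noteq> t" "b \<noteq> t" "a \<noteq> b" "\<not> E a b"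
    and ev: "eigenvalue (adj_mat n E) \<mu>"
  shows "\<mu> < real n - 2"
proof -
  have sym: "E x y = E y x" for x y using simple_sym[OF sg] .
  have irr: "\<not> E x x" for x using sg unfolding simple_graph_def by blast
  define V' where "V' = {..<n} - {t}"
  define W where "W = nb n E t"
  define Wf where "Wf = {w \<in> nb n E t. \<forall>x<n. x \<noteq> t \<longrightarrow> x \<noteq> w \<longrightarrow> E w x}"
  define Dd where "Dd = {v \<in> V'. \<exists>x\<in>V'. x \<noteq> v \<and> \<not> E v x}"
  define d where "d = deg n E t"
  define f where "f = card Wf"
  define m where "m = card Dd"
  have finV: "finite V'" unfolding V'_def by simp
  have WV: "W \<subseteq> V'" unfolding W_def V'_def nb_def using irr by auto
  have WfW: "Wf \<subseteq> W" unfolding Wf_def W_def by auto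
  have WfV: "Wf \<subseteq> V'" using WfW WV by auto
  have DdV: "Dd \<subseteq> V'" unfolding Dd_def by auto
  have disj: "Wf \<inter> Dd = {}" unfolding Wf_def Dd_def V'_def by auto
  have finWf: "finite Wf" using WfV finV finite_subset by blast
  have finDd: "finite Dd" using DdV finV finite_subset by blast
  have finW: "finite W" using WV finV finite_subset by blast
  have aV: "a \<in> V'" and bV: "b \<in> V'" using nonc unfolding V'_def by auto
  have ba: "b \<noteq> a" using nonc(5) by simp
  have aD: "a \<in> Dd" unfolding Dd_def using aV bV ba nonc(6) by blast
  have "\<not> E b a" using nonc(6) sym by metis
  hence bD: "b \<in> Dd" unfolding Dd_def using aV bV nonc(5) by blast
  have m2: "m \<ge> 2"
  proof -
    have "{a, b} \<subseteq> Dd" using aD bD by auto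
    hence "card {a, b} \<le> m" unfolding m_def using finDd card_mono by blast
    thus ?thesis using nonc(5) by simp
  qed
  have fr: "f + 1 \<le> r" using Wfs unfolding f_def Wf_def by simp
  have WWD: "W \<subseteq> Wf \<union> Dd"
  proof
    fix w assume w: "w \<in> W"
    show "w \<in> Wf \<union> Dd"
    proof (cases "\<forall>x<n. x \<noteq> t \<longrightarrow> x \<noteq> w \<longrightarrow> E w x")
      case True thus ?thesis using w unfolding Wf_def W_def by auto
    next
      case False
      then obtain x where "x < n" "x \<noteq> t" "x \<noteq> w" "\<not> E w x" by blast
      thus ?thesis using w WV unfolding Dd_def V'_def by auto
    qed
  qed
  have dfm: "d \<le> f + m"
  proof -
    have "d = card W" unfolding d_def deg_def W_def ..
    also have "\<dots> \<le> card (Wf \<union> Dd)" by (rule card_mono) (use WWD finWf finDd in auto)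
    also have "\<dots> \<le> f + m" unfolding f_def m_def by (rule card_Un_le)
    finally show ?thesis .
  qed
  have drm: "d + 1 \<le> (r+1) * m"
  proof -
    have "r \<le> r * m" using m2 by simp
    moreover have "(r+1)*m = r*m + m" by simp
    ultimately show ?thesis using dfm fr by linarith
  qed
  define N where "N = real n"
  define R where "R = real r"
  define F where "F = real f"
  define M where "M = real m"
  define Dg where "Dg = real d"
  have N7: "N \<ge> 8" using nbig unfolding N_def by simp
  have R1: "R \<ge> 1" using r1 unfolding R_def by simp
  have "real (2*r*(r+1) + 2*r + 7) < real n" using nbig by (simp only: of_nat_less_iff)
  hence NR: "N > 2*R*(R+1) + 2*R + 7" unfolding N_def R_def by (simp add: algebra_simps)
  define K where "K = N - R"
  have Kpos: "K > 2*R*(R+1) + R + 7" using NR R1 unfolding K_def by simp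
  have "2*R*(R+1) \<ge> 0" using R1 by simp
  hence Kp: "K > 0" using Kpos R1 by linarith
  have M2: "M \<ge> 2" using m2 unfolding M_def by simp
  have "real (f + 1) \<le> real r" using fr by (simp only: of_nat_le_iff)
  hence FR: "F + 1 \<le> R" unfolding F_def R_def by simp
  have F0: "F \<ge> 0" unfolding F_def by simp
  have Dg0: "Dg \<ge> 0" unfolding Dg_def by simp
  have "real (d + 1) \<le> real ((r+1) * m)" using drm by (simp only: of_nat_le_iff)
  hence DRM: "Dg + 1 \<le> (R+1) * M" unfolding Dg_def R_def M_def by (simp add: algebra_simps)
  have "real (4 * d) < real n" using dsmall unfolding d_def by (simp only: of_nat_less_iff)
  hence Dgs: "4 * Dg < N" unfolding Dg_def N_def by simp
  define \<beta> where "\<beta> = (Dg + 1) / (N - 2)"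
  define \<epsilon> where "\<epsilon> = \<beta> / K"
  define \<delta> where "\<delta> = \<epsilon> * (F + 1) / M"
  have N2: "N - 2 > 0" using N7 by simp
  have bpos: "\<beta> > 0" unfolding \<beta>_def using N2 Dg0 by simp
  have bhalf: "\<beta> \<le> 1/2"
  proof -
    have "Dg + 1 \<le> (N - 2) / 2" using Dgs N7 by simp
    thus ?thesis unfolding \<beta>_def using N2 by (simp add: divide_le_eq)
  qed
  have bN2: "\<beta> * (N - 2) = Dg + 1" unfolding \<beta>_def using N2 by simp
  have epos: "\<epsilon> > 0" unfolding \<epsilon>_def using bpos Kp by simp
  have Mpos: "M > 0" using M2 by simp
  have dpos: "\<delta> > 0" unfolding \<delta>_def using epos F0 Mpos by simp
  have dM: "\<delta> * M = \<epsilon> * (F + 1)" unfolding \<delta>_def using Mpos by simp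
  have eF: "\<epsilon> * F \<le> R / (2 * K)"
  proof -
    have "\<epsilon> * F = \<beta> * F / K" unfolding \<epsilon>_def by simp
    also have "\<dots> \<le> (1/2) * R / K" using bhalf F0 FR bpos Kp R1
      by (intro divide_right_mono mult_mono) auto
    finally show ?thesis by simp
  qed
  have dN: "\<delta> * (N - 2) \<le> R * (R + 1) / K"
  proof -
    have "\<delta> * (N - 2) = (\<beta> * (N - 2)) * (F + 1) / (K * M)" unfolding \<delta>_def \<epsilon>_def by (simp add: field_simps)
    also have "\<dots> = (Dg + 1) * (F + 1) / (K * M)" using bN2 by simp
    also have "\<dots> \<le> ((R+1) * M) * R / (K * M)" using DRM FR F0 Dg0 Kp R1 Mpos
      by (intro divide_right_mono mult_mono) auto
    also have "\<dots> = R * (R + 1) / K" using Mpos Kp by (simp add: field_simps)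
    finally show ?thesis .
  qed
  have key: "\<epsilon> * F + \<beta> + \<delta> * (N - 2) < 1"
  proof -
    have "R / (2 * K) + R * (R + 1) / K < 1/2"
    proof -
      have "R / (2 * K) + R * (R + 1) / K = (R + 2 * R * (R + 1)) / (2 * K)" using Kp R1 by (simp add: field_simps)
      also have "\<dots> < 1/2" using Kp Kpos R1 by (simp add: divide_less_eq)
      finally show ?thesis .
    qed
    thus ?thesis using eF dN bhalf by linarith
  qed
  have dN0: "\<delta> * (N - 2) > 0" using dpos N2 by simp
  have eF0: "\<epsilon> * F \<ge> 0" using epos F0 by simp
  have eF1: "\<epsilon> * F < 1" using key bpos dN0 by linarith
  have bNe: "\<beta> < N * \<epsilon>"
  proof -
    have "N * \<epsilon> = \<beta> * (N / K)" unfolding \<epsilon>_def by simp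
    moreover have "N / K > 1" using Kp R1 unfolding K_def by simp
    ultimately show ?thesis using bpos by (metis mult.right_neutral mult_strict_left_mono)
  qed
  have dlt1: "\<delta> < 1"
  proof -
    have "\<delta> * (N - 2) < 1" using key eF0 bpos by linarith
    moreover have "\<delta> \<le> \<delta> * (N - 2)" using dpos N7 by simp
    ultimately show ?thesis by simp
  qed
  define z where "z v = (if v = t then \<beta> else if v \<in> Wf then 1 + \<epsilon> else if v \<in> Dd then 1 - \<delta> else 1)" for v
  have zpos: "z v > 0" for v unfolding z_def using bpos epos dlt1 by auto
  have sumS: "sum z S = real (card S) + \<epsilon> * real (card (S \<inter> Wf)) - \<delta> * real (card (S \<inter> Dd))"
    if S: "S \<subseteq> V'" for S
  proof -
    have finS: "finite S" using S finV finite_subset by blast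
    have tS: "t \<notin> S" using S unfolding V'_def by auto
    have "sum z S = (\<Sum>v\<in>S. 1 + (if v \<in> Wf then \<epsilon> else 0) - (if v \<in> Dd then \<delta> else 0))"
      by (rule sum.cong[OF refl]) (use tS disj in \<open>auto simp: z_def\<close>)
    also have "\<dots> = real (card S) + (\<Sum>v\<in>S. if v \<in> Wf then \<epsilon> else 0) - (\<Sum>v\<in>S. if v \<in> Dd then \<delta> else 0)"
      by (simp add: sum.distrib sum_subtractf)
    also have "\<dots> = real (card S) + \<epsilon> * real (card (S \<inter> Wf)) - \<delta> * real (card (S \<inter> Dd))"
      by (simp add: sum_indicator[OF finS])
    finally show ?thesis .
  qed
  have cardV: "card V' = n - 1" unfolding V'_def using t by simp
  have sV: "sum z V' = (N - 1) + \<epsilon> * F - \<delta> * M"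
  proof -
    have "V' \<inter> Wf = Wf" "V' \<inter> Dd = Dd" using WfV DdV by auto
    thus ?thesis using sumS[of V'] cardV t unfolding N_def F_def M_def f_def m_def by (simp add: of_nat_diff)
  qed
  have sAll: "sum z {..<n} = \<beta> + sum z V'"
  proof -
    have "{..<n} = insert t V'" unfolding V'_def using t by auto
    moreover have "t \<notin> V'" unfolding V'_def by auto
    ultimately show ?thesis using finV by (simp add: z_def)
  qed
  have zlt: "nsum n E z i < (N - 2) * z i" if i: "i < n" for i
  proof -
    have ns: "nsum n E z i = sum z (nb n E i)" unfolding nsum_set nb_def ..
    consider "i = t" | "i \<noteq> t" "i \<in> Wf" | "i \<noteq> t" "i \<in> Dd" | "i \<noteq> t" "i \<notin> Wf" "i \<notin> Dd" by blast
    thus ?thesis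
    proof cases
      case 1
      have "sum z W = Dg + \<epsilon> * real (card (W \<inter> Wf)) - \<delta> * real (card (W \<inter> Dd))"
        using sumS[OF WV] unfolding Dg_def d_def deg_def W_def by simp
      moreover have "real (card (W \<inter> Wf)) \<le> F" unfolding F_def f_def using finWf
        by (simp add: card_mono)
      moreover have "\<epsilon> * real (card (W \<inter> Wf)) \<le> \<epsilon> * F" using calculation(2) epos by simp
      moreover have "\<delta> * real (card (W \<inter> Dd)) \<ge> 0" using dpos by simp
      ultimately have "sum z W \<le> Dg + \<epsilon> * F" by linarith
      hence "nsum n E z i < Dg + 1" using ns 1 eF1 unfolding W_def by simp
      thus ?thesis using 1 bN2 by (simp add: z_def mult.commute)
    next
      case 2
      have nbi: "nb n E i = insert t (V' - {i})"
      proof -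
        have "i \<in> W" using 2 WfW by auto
        hence "E i t" using sym unfolding W_def nb_def by auto
        moreover have "E i x" if "x \<in> V'" "x \<noteq> i" for x using 2 that unfolding Wf_def V'_def by auto
        ultimately show ?thesis using irr t unfolding nb_def V'_def by auto
      qed
      have iV: "i \<in> V'" using 2 WfV by auto
      have "nsum n E z i = \<beta> + (sum z V' - z i)" unfolding ns nbi using iV finV
        by (simp add: sum_diff1 z_def V'_def)
      also have "\<dots> = \<beta> + (N - 1) + \<epsilon> * F - \<delta> * M - (1 + \<epsilon>)" using 2 sV by (simp add: z_def)
      also have "\<dots> < (N - 2) * (1 + \<epsilon>)" using dM bNe by (simp add: algebra_simps)
      finally show ?thesis using 2 by (simp add: z_def)
    next
      case 3
      obtain x0 where x0: "x0 \<in> V'" "x0 \<noteq> i" "\<not> E i x0" using 3 unfolding Dd_def by auto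
      have iV: "i \<in> V'" using 3 DdV by auto
      have "i \<noteq> x0" using x0(2) by simp
      moreover have "\<not> E x0 i" using x0(3) sym by metis
      ultimately have x0D: "x0 \<in> Dd" using x0(1) iV unfolding Dd_def by blast
      have x0nW: "x0 \<notin> Wf" using x0D disj by auto
      have sub: "nb n E i \<subseteq> {..<n} - {i, x0}" using x0 irr unfolding nb_def by auto
      have "nsum n E z i \<le> sum z ({..<n} - {i, x0})" unfolding ns
        by (rule sum_mono2) (use sub zpos in \<open>auto intro: less_imp_le\<close>)
      also have "\<dots> = sum z {..<n} - z i - z x0"
      proof -
        have "{..<n} - {i, x0} = ({..<n} - {i}) - {x0}" by auto
        thus ?thesis using iV x0 unfolding V'_def by (simp add: sum_diff1)
      qed
      also have "\<dots> = \<beta> + (N - 1) + \<epsilon> * F - \<delta> * M - 2 * (1 - \<delta>)"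
        using sAll sV 3 x0D x0nW disj x0 iV unfolding V'_def by (auto simp: z_def)
      also have "\<dots> < (N - 2) * (1 - \<delta>)"
      proof -
        have "\<delta> * M \<ge> 2 * \<delta>" using M2 dpos by simp
        thus ?thesis using key by (simp add: algebra_simps)
      qed
      finally show ?thesis using 3 disj by (auto simp: z_def)
    next
      case 4
      have iV: "i \<in> V'" using 4 i unfolding V'_def by auto
      have full: "E i x" if "x \<in> V'" "x \<noteq> i" for x using 4 iV that unfolding Dd_def by auto
      have "i \<notin> W"
      proof
        assume "i \<in> W"
        hence "i \<in> Wf" using full unfolding Wf_def W_def V'_def by auto
        thus False using 4 by simp
      qed
      hence "\<not> E i t" using sym unfolding W_def nb_def using i by auto
      hence nbi: "nb n E i = V' - {i}" using full irr unfolding nb_def V'_def by auto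
      have "nsum n E z i = sum z V' - z i" unfolding ns nbi using iV finV by (simp add: sum_diff1)
      also have "\<dots> = N - 2 + \<epsilon> * F - \<delta> * M" using 4 sV by (simp add: z_def)
      also have "\<dots> < N - 2" using dM epos by (simp add: algebra_simps)
      finally show ?thesis using 4 by (simp add: z_def)
    qed
  qed
  have "\<mu> < N - 2" by (rule collatz_upper[OF sg _ _ ev, of z]) (use zpos zlt in auto)
  thus ?thesis unfolding N_def .
qed

definition hasKr :: "nat \<Rightarrow> (nat \<Rightarrow> nat \<Rightarrow> bool) \<Rightarrow> nat \<Rightarrow> nat \<Rightarrow> bool" where
  "hasKr n E r v \<longleftrightarrow> (\<exists>Q. Q \<subseteq> nb n E v \<and> card Q = r \<and> (\<forall>a\<in>Q. \<forall>b\<in>Q. a \<noteq> b \<longrightarrow> E a b))"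

lemma SL_c1:
  fixes n r t :: nat
  assumes sg: "simple_graph n E" and t: "t < n" and r2: "r \<ge> 2" and n: "n \<ge> r + 2"
    and comp: "\<forall>a<n. \<forall>b<n. a \<noteq> t \<longrightarrow> b \<noteq> t \<longrightarrow> a \<noteq> b \<longrightarrow> E a b"
    and dle: "deg n E t + 2 \<le> r"
    and ev: "eigenvalue (adj_mat n E) \<mu>"
  shows "\<mu> < lambda_max n (H_graph n r)"
proof -
  obtain \<mu>0 x b where H: "eigenvalue (adj_mat n (H_graph n r)) \<mu>0" "real n - 2 < \<mu>0" "\<mu>0 * x = real r - 1"
     "\<mu>0 * b = (real r - 1) + (real n - real r - 1) * b" "\<mu>0 = x + (real r - 2) + (real n - real r) * b"
     "0 < x" "0 < b" "b < 1"
    using H_eig2[OF r2 n] by blast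
  have sym: "E p q = E q p" for p q using simple_sym[OF sg] .
  have irr: "\<not> E p p" for p using sg unfolding simple_graph_def by blast
  define V' where "V' = {..<n} - {t}"
  define W where "W = nb n E t"
  define d where "d = deg n E t"
  have finV: "finite V'" unfolding V'_def by simp
  have WV: "W \<subseteq> V'" unfolding W_def V'_def nb_def using irr by auto
  have finW: "finite W" using WV finV finite_subset by blast
  have cW: "card W = d" unfolding W_def d_def deg_def ..
  have cV: "card V' = n - 1" unfolding V'_def using t by simp
  have dn: "d \<le> n - 1" using card_mono[OF finV WV] cW cV by simp
  define z where "z v = (if v = t then x else if v \<in> W then 1 else b)" for v
  have zpos: "z v > 0" for v unfolding z_def using H by auto
  have sW: "sum z W = real d"
  proof -
    have "sum z W = sum (\<lambda>_. 1) W" by (rule sum.cong) (use WV in \<open>auto simp: z_def V'_def\<close>)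
    thus ?thesis using cW by simp
  qed
  have sVW: "sum z (V' - W) = (real n - 1 - real d) * b"
  proof -
    have "sum z (V' - W) = sum (\<lambda>_. b) (V' - W)" by (rule sum.cong) (auto simp: z_def V'_def)
    also have "card (V' - W) = n - 1 - d" using card_Diff_subset[OF finW WV] cW cV by simp
    ultimately show ?thesis using dn t by (simp add: of_nat_diff)
  qed
  have sV: "sum z V' = real d + (real n - 1 - real d) * b"
  proof -
    have "sum z V' = sum z W + sum z (V' - W)"
      using sum.subset_diff[OF WV finV, of z] by simp
    thus ?thesis using sW sVW by simp
  qed
  have "real (d + 2) \<le> real r" using dle unfolding d_def by (simp only: of_nat_le_iff)
  hence Dr: "real d + 2 \<le> real r" by simp
  have gap: "(real r - 1 - real d) * (1 - b) > 0" using Dr H(8) by simp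
  have zlt: "nsum n E z i < \<mu>0 * z i" if i: "i < n" for i
  proof -
    have ns: "nsum n E z i = sum z (nb n E i)" unfolding nsum_set nb_def ..
    consider "i = t" | "i \<noteq> t" "i \<in> W" | "i \<noteq> t" "i \<notin> W" by blast
    thus ?thesis
    proof cases
      case 1
      have "nsum n E z i = real d" using ns sW 1 unfolding W_def by simp
      thus ?thesis using 1 H(3) Dr by (simp add: z_def)
    next
      case 2
      have iV: "i \<in> V'" using 2 WV by auto
      have nbi: "nb n E i = insert t (V' - {i})"
      proof -
        have "E i t" using 2 sym unfolding W_def nb_def by auto
        thus ?thesis using comp irr t i 2 unfolding nb_def V'_def by auto
      qed
      have "nsum n E z i = x + (sum z V' - 1)" unfolding ns nbi using iV finV 2
        by (simp add: sum_diff1 z_def V'_def)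
      also have "\<dots> = x + real d + (real n - 1 - real d) * b - 1" using sV by simp
      also have "\<dots> < \<mu>0" using H(5) gap by (simp add: algebra_simps)
      finally show ?thesis using 2 by (simp add: z_def)
    next
      case 3
      have iV: "i \<in> V'" using 3 i unfolding V'_def by auto
      have "\<not> E i t" using 3 sym i unfolding W_def nb_def by auto
      hence nbi: "nb n E i = V' - {i}" using comp irr t i 3 unfolding nb_def V'_def by auto
      have "nsum n E z i = sum z V' - b" unfolding ns nbi using iV finV 3
        by (simp add: sum_diff1 z_def)
      also have "\<dots> = real d + (real n - 1 - real d) * b - b" using sV by simp
      also have "\<dots> < \<mu>0 * b" using H(4) gap by (simp add: algebra_simps)
      finally show ?thesis using 3 by (simp add: z_def)
    qed
  qed
  have "\<mu> < \<mu>0" by (rule collatz_upper[OF sg _ _ ev, of z]) (use zpos zlt in auto)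
  thus ?thesis using lambda_ge[OF H(1)] by simp
qed

lemma SL_c2:
  fixes n r t :: nat
  assumes sg: "simple_graph n E" and t: "t < n" and r1: "r \<ge> 1" and n: "n \<ge> r + 1"
    and comp: "\<forall>a<n. \<forall>b<n. a \<noteq> t \<longrightarrow> b \<noteq> t \<longrightarrow> a \<noteq> b \<longrightarrow> E a b"
    and dr: "deg n E t = r - 1"
  shows "graph_iso n E (H_graph n r)"
proof -
  have sym: "E p q = E q p" for p q using simple_sym[OF sg] .
  have irr: "\<not> E p p" for p using sg unfolding simple_graph_def by blast
  have rng: "E p q \<Longrightarrow> p < n \<and> q < n" for p q using sg unfolding simple_graph_def by blast
  define V' where "V' = {..<n} - {t}"
  define W where "W = nb n E t"
  have finV: "finite V'" unfolding V'_def by simp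
  have WV: "W \<subseteq> V'" unfolding W_def V'_def nb_def using irr by auto
  have finW: "finite W" using WV finV finite_subset by blast
  have cW: "card W = r - 1" unfolding W_def using dr unfolding deg_def .
  have cV: "card V' = n - 1" unfolding V'_def using t by simp
  have cVW: "card (V' - W) = n - r" using card_Diff_subset[OF finW WV] cW cV n r1 by simp
  obtain g1 where g1: "bij_betw g1 W {..<r-1}"
    using finite_same_card_bij[OF finW, of "{..<r-1}"] cW by auto
  obtain g2 where g2: "bij_betw g2 (V' - W) {r-1..<n-1}"
  proof -
    have "card {r-1..<n-1} = n - r" using n r1 by simp
    hence "\<exists>h. bij_betw h (V' - W) {r-1..<n-1}"
      using finite_same_card_bij[of "V' - W" "{r-1..<n-1}"] cVW finV by auto
    thus ?thesis using that by blast
  qed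
  define f where "f i = (if i = t then n - 1 else if i \<in> W then g1 i else g2 i)" for i
  have b1: "bij_betw f W {..<r-1}"
  proof -
    have "bij_betw f W {..<r-1} = bij_betw g1 W {..<r-1}"
      by (rule bij_betw_cong) (use WV in \<open>auto simp: f_def V'_def\<close>)
    thus ?thesis using g1 by simp
  qed
  have b2: "bij_betw f (V' - W) {r-1..<n-1}"
  proof -
    have "bij_betw f (V' - W) {r-1..<n-1} = bij_betw g2 (V' - W) {r-1..<n-1}"
      by (rule bij_betw_cong) (auto simp: f_def V'_def)
    thus ?thesis using g2 by simp
  qed
  have b3: "bij_betw f {t} {n-1}" by (simp add: f_def bij_betw_def)
  have b12: "bij_betw f (W \<union> (V' - W)) ({..<r-1} \<union> {r-1..<n-1})"
    by (rule bij_betw_combine[OF b1 b2]) auto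
  have b123: "bij_betw f ({t} \<union> (W \<union> (V' - W))) ({n-1} \<union> ({..<r-1} \<union> {r-1..<n-1}))"
    by (rule bij_betw_combine[OF b3 b12]) (use n in auto)
  have e1: "{t} \<union> (W \<union> (V' - W)) = {..<n}" using WV t unfolding V'_def by auto
  have e2: "{n-1} \<union> ({..<r-1} \<union> {r-1..<n-1}) = {..<n}" using n by auto
  have bij: "bij_betw f {..<n} {..<n}" using b123 unfolding e1 e2 .
  have finj: "f i = f j \<longleftrightarrow> i = j" if "i < n" "j < n" for i j
    using bij that unfolding bij_betw_def inj_on_def by auto
  have frng: "f i < n" if "i < n" for i using bij that unfolding bij_betw_def by auto
  have fW: "f i < r - 1 \<longleftrightarrow> i \<in> W" if "i < n" "i \<noteq> t" for i
  proof -
    have "i \<in> V'" using that unfolding V'_def by auto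
    show ?thesis
    proof (cases "i \<in> W")
      case True thus ?thesis using b1 unfolding bij_betw_def by auto
    next
      case False
      hence "f i \<in> {r-1..<n-1}" using b2 \<open>i \<in> V'\<close> unfolding bij_betw_def by auto
      thus ?thesis using False by auto
    qed
  qed
  have fnt: "f i < n - 1" if "i < n" "i \<noteq> t" for i
  proof -
    have "f i \<noteq> f t" using finj[OF that(1) t] that by simp
    moreover have "f t = n - 1" by (simp add: f_def)
    ultimately show ?thesis using frng[OF that(1)] by simp
  qed
  have ft: "f t = n - 1" by (simp add: f_def)
  have edges: "E i j \<longleftrightarrow> H_graph n r (f i) (f j)" if ij: "i < n" "j < n" for i j
  proof (cases "i = t")
    case True
    show ?thesis
    proof (cases "j = t")
      case True thus ?thesis using \<open>i = t\<close> irr unfolding H_graph_def by simp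
    next
      case False
      have "E i j \<longleftrightarrow> j \<in> W" using True ij unfolding W_def nb_def by auto
      also have "\<dots> \<longleftrightarrow> f j < r - 1" using fW[OF ij(2) False] by simp
      also have "\<dots> \<longleftrightarrow> H_graph n r (f i) (f j)" using True ft fnt[OF ij(2) False] frng ij n
        unfolding H_graph_def by auto
      finally show ?thesis .
    qed
  next
    case False
    show ?thesis
    proof (cases "j = t")
      case True
      have "E i j \<longleftrightarrow> i \<in> W" using True ij sym unfolding W_def nb_def by auto
      also have "\<dots> \<longleftrightarrow> f i < r - 1" using fW[OF ij(1) False] by simp
      also have "\<dots> \<longleftrightarrow> H_graph n r (f i) (f j)" using True ft fnt[OF ij(1) False] frng ij n
        unfolding H_graph_def by auto
      finally show ?thesis .
    next
      case jt: False
      have "E i j \<longleftrightarrow> i \<noteq> j" using comp ij False jt irr by auto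
      also have "\<dots> \<longleftrightarrow> f i \<noteq> f j" using finj ij by simp
      also have "\<dots> \<longleftrightarrow> H_graph n r (f i) (f j)" using fnt[OF ij(1) False] fnt[OF ij(2) jt] ij
        unfolding H_graph_def by auto
      finally show ?thesis .
    qed
  qed
  show ?thesis unfolding graph_iso_def using bij edges by blast
qed

lemma SL:
  fixes n r t :: nat
  assumes sg: "simple_graph n E" and t: "t < n" and r1: "r \<ge> 1"
    and nbig: "n > 2*r*(r+1) + 2*r + 7"
    and dsmall: "4 * deg n E t < n"
    and noK: "\<not> hasKr n E r t"
    and ev: "eigenvalue (adj_mat n E) \<mu>"
    and ge: "lambda_max n (H_graph n r) \<le> \<mu>"
  shows "graph_iso n E (H_graph n r)"
proof -
  have sym: "E p q = E q p" for p q using simple_sym[OF sg] .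
  have irr: "\<not> E p p" for p using sg unfolding simple_graph_def by blast
  have n2: "n \<ge> r + 2" using nbig by simp
  have lH: "real n - 2 \<le> lambda_max n (H_graph n r)" by (rule lambda_H_ge[OF r1 n2])
  show ?thesis
  proof (cases "\<exists>a b. a < n \<and> b < n \<and> a \<noteq> t \<and> b \<noteq> t \<and> a \<noteq> b \<and> \<not> E a b")
    case True
    then obtain a b where ab: "a < n" "b < n" "a \<noteq> t" "b \<noteq> t" "a \<noteq> b" "\<not> E a b" by blast
    define Wf where "Wf = {w \<in> nb n E t. \<forall>x<n. x \<noteq> t \<longrightarrow> x \<noteq> w \<longrightarrow> E w x}"
    have "card Wf < r"
    proof (rule ccontr)
      assume "\<not> card Wf < r"
      then obtain Q where Q: "Q \<subseteq> Wf" "card Q = r"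
        by (meson not_less obtain_subset_with_card_n)
      have "Q \<subseteq> nb n E t" using Q unfolding Wf_def by auto
      moreover have "\<forall>p\<in>Q. \<forall>q\<in>Q. p \<noteq> q \<longrightarrow> E p q"
      proof (intro ballI impI)
        fix p q assume pq: "p \<in> Q" "q \<in> Q" "p \<noteq> q"
        have "q \<in> nb n E t" using pq Q unfolding Wf_def by auto
        hence "q < n" "q \<noteq> t" using irr unfolding nb_def by auto
        thus "E p q" using pq Q unfolding Wf_def by auto
      qed
      ultimately have "hasKr n E r t" unfolding hasKr_def using Q by blast
      thus False using noK by simp
    qed
    hence "\<mu> < real n - 2" using SL_ab[OF sg t r1 nbig dsmall _ ab ev] unfolding Wf_def by simp
    thus ?thesis using ge lH by simp
  next
    case False
    hence comp: "\<forall>a<n. \<forall>b<n. a \<noteq> t \<longrightarrow> b \<noteq> t \<longrightarrow> a \<noteq> b \<longrightarrow> E a b" by blast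
    have "\<not> deg n E t \<ge> r"
    proof
      assume "deg n E t \<ge> r"
      then obtain Q where Q: "Q \<subseteq> nb n E t" "card Q = r"
        unfolding deg_def by (meson obtain_subset_with_card_n)
      have "\<forall>p\<in>Q. \<forall>q\<in>Q. p \<noteq> q \<longrightarrow> E p q"
      proof (intro ballI impI)
        fix p q assume pq: "p \<in> Q" "q \<in> Q" "p \<noteq> q"
        have "p < n" "p \<noteq> t" "q < n" "q \<noteq> t" using pq Q irr unfolding nb_def by auto
        thus "E p q" using comp pq by blast
      qed
      hence "hasKr n E r t" unfolding hasKr_def using Q by blast
      thus False using noK by simp
    qed
    hence dlt: "deg n E t < r" by simp
    show ?thesis
    proof (cases "deg n E t + 2 \<le> r")
      case True
      have "\<mu> < lambda_max n (H_graph n r)" by (rule SL_c1[OF sg t _ n2 comp True ev]) (use True in simp)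
      thus ?thesis using ge by simp
    next
      case False
      hence dr: "deg n E t = r - 1" using dlt by simp
      have n1: "n \<ge> r + 1" using n2 by simp
      show ?thesis by (rule SL_c2[OF sg t r1 n1 comp dr])
    qed
  qed
qed

definition clq :: "(nat \<Rightarrow> nat \<Rightarrow> bool) \<Rightarrow> nat set \<Rightarrow> bool" where
  "clq E Q \<longleftrightarrow> (\<forall>a\<in>Q. \<forall>b\<in>Q. a \<noteq> b \<longrightarrow> E a b)"

lemma greedy_clique:
  assumes sym: "\<And>x y. E x y = E y x"
  shows "finite W \<Longrightarrow> (\<forall>w\<in>W. card {x\<in>W. x \<noteq> w \<and> \<not> E w x} < D) \<Longrightarrow> k * D < card W + D
     \<Longrightarrow> \<exists>Q \<subseteq> W. card Q = k \<and> clq E Q"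
proof (induction k arbitrary: W)
  case 0
  show ?case by (rule exI[of _ "{}"]) (simp add: clq_def)
next
  case (Suc k)
  have "card W > k * D" using Suc.prems(3) by simp
  hence "W \<noteq> {}" by auto
  then obtain w where w: "w \<in> W" by blast
  define W' where "W' = {x\<in>W. x \<noteq> w \<and> E w x}"
  define N' where "N' = {x\<in>W. x \<noteq> w \<and> \<not> E w x}"
  have "W \<subseteq> insert w (W' \<union> N')" unfolding W'_def N'_def by auto
  hence "card W \<le> card (insert w (W' \<union> N'))" by (rule card_mono[rotated]) (use Suc.prems(1) in \<open>auto simp: W'_def N'_def\<close>)
  also have "\<dots> \<le> Suc (card (W' \<union> N'))" by (rule card_insert_le_m1) auto
  also have "card (W' \<union> N') \<le> card W' + card N'" by (rule card_Un_le)
  finally have cW: "card W \<le> Suc (card W' + card N')" by simp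
  have "card N' < D" using Suc.prems(2) w unfolding N'_def by auto
  hence "k * D < card W' + D" using cW \<open>card W > k * D\<close> by linarith
  moreover have "finite W'" using Suc.prems(1) unfolding W'_def by simp
  moreover have "\<forall>v\<in>W'. card {x\<in>W'. x \<noteq> v \<and> \<not> E v x} < D"
  proof
    fix v assume v: "v \<in> W'"
    have "card {x\<in>W'. x \<noteq> v \<and> \<not> E v x} \<le> card {x\<in>W. x \<noteq> v \<and> \<not> E v x}"
      by (rule card_mono) (use Suc.prems(1) in \<open>auto simp: W'_def\<close>)
    thus "card {x\<in>W'. x \<noteq> v \<and> \<not> E v x} < D" using Suc.prems(2) v unfolding W'_def by fastforce
  qed
  ultimately obtain Q where Q: "Q \<subseteq> W'" "card Q = k" "clq E Q" using Suc.IH by blast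
  have wQ: "w \<notin> Q" using Q(1) unfolding W'_def by auto
  have finQ: "finite Q" using Q(1) \<open>finite W'\<close> finite_subset by blast
  show ?case
  proof (rule exI[of _ "insert w Q"], intro conjI)
    show "insert w Q \<subseteq> W" using Q(1) w unfolding W'_def by auto
    show "card (insert w Q) = Suc k" using Q(2) wQ finQ by simp
    show "clq E (insert w Q)" using Q(1,3) sym unfolding clq_def W'_def by auto
  qed
qed

definition goodp :: "nat \<Rightarrow> (nat \<Rightarrow> nat \<Rightarrow> bool) \<Rightarrow> nat \<Rightarrow> nat \<Rightarrow> (nat \<Rightarrow> nat) \<Rightarrow> bool" where
  "goodp n E s p f \<longleftrightarrow> s dvd p \<and> inj_on f {..<p} \<and> f ` {..<p} \<subseteq> {..<n} \<and>
     (\<forall>i<p. \<forall>j<p. i \<noteq> j \<and> i div s = j div s \<longrightarrow> E (f i) (f j))"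

lemma goodp_step:
  assumes g: "goodp n E s p f" and s: "s > 0"
    and B: "B \<subseteq> {..<n}" "card B = s" "clq E B" "B \<inter> f ` {..<p} = {}"
  shows "\<exists>f'. goodp n E s (p + s) f' \<and> f' ` {..<p+s} = f ` {..<p} \<union> B"
proof -
  have finB: "finite B" using B(1) finite_subset by blast
  obtain h where h: "bij_betw h {..<s} B" using finite_same_card_bij[of "{..<s}" B] finB B(2) by auto
  define f' where "f' i = (if i < p then f i else h (i - p))" for i
  obtain c where pc: "p = s * c" using g unfolding goodp_def by blast
  have img: "f' ` {..<p+s} = f ` {..<p} \<union> B"
  proof
    show "f' ` {..<p+s} \<subseteq> f ` {..<p} \<union> B"
    proof
      fix y assume "y \<in> f' ` {..<p+s}"
      then obtain i where i: "i < p + s" "y = f' i" by auto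
      show "y \<in> f ` {..<p} \<union> B"
      proof (cases "i < p")
        case True thus ?thesis using i unfolding f'_def by auto
      next
        case False
        hence "i - p < s" using i by simp
        thus ?thesis using i False h unfolding f'_def bij_betw_def by auto
      qed
    qed
    show "f ` {..<p} \<union> B \<subseteq> f' ` {..<p+s}"
    proof
      fix y assume y: "y \<in> f ` {..<p} \<union> B"
      show "y \<in> f' ` {..<p+s}"
      proof (cases "y \<in> B")
        case True
        then obtain k where k: "k < s" "h k = y" using h unfolding bij_betw_def by auto
        have "f' (p + k) = y" using k unfolding f'_def by simp
        moreover have "p + k < p + s" using k by simp
        ultimately show ?thesis by blast
      next
        case False
        then obtain i where "i < p" "y = f i" using y by auto
        thus ?thesis unfolding f'_def by force
      qed
    qed
  qed
  have hinj: "h a = h b \<Longrightarrow> a < s \<Longrightarrow> b < s \<Longrightarrow> a = b" for a b using h unfolding bij_betw_def inj_on_def by auto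
  have hB: "a < s \<Longrightarrow> h a \<in> B" for a using h unfolding bij_betw_def by auto
  have inj: "inj_on f' {..<p+s}"
  proof (rule inj_onI)
    fix i j assume ij: "i \<in> {..<p+s}" "j \<in> {..<p+s}" "f' i = f' j"
    consider "i < p" "j < p" | "i < p" "\<not> j < p" | "\<not> i < p" "j < p" | "\<not> i < p" "\<not> j < p" by blast
    thus "i = j"
    proof cases
      case 1 thus ?thesis using ij g unfolding f'_def goodp_def inj_on_def by auto
    next
      case 2
      have "f' i \<in> f ` {..<p}" using 2 unfolding f'_def by auto
      moreover have "j - p < s" using 2 ij by auto
      hence "f' j \<in> B" using 2 hB unfolding f'_def by auto
      ultimately show ?thesis using ij B(4) by auto
    next
      case 3
      have "f' j \<in> f ` {..<p}" using 3 unfolding f'_def by auto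
      moreover have "i - p < s" using 3 ij by auto
      hence "f' i \<in> B" using 3 hB unfolding f'_def by auto
      ultimately show ?thesis using ij B(4) by auto
    next
      case 4
      have "i - p = j - p" using hinj[of "i - p" "j - p"] ij 4 unfolding f'_def by auto
      thus ?thesis using 4 by simp
    qed
  qed
  have edges: "E (f' i) (f' j)" if ij: "i < p + s" "j < p + s" "i \<noteq> j" "i div s = j div s" for i j
  proof -
    have lowblk: "k < p \<longleftrightarrow> k div s < c" for k using pc s by (simp add: div_less_iff_less_mult mult.commute)
    have "i < p \<longleftrightarrow> j < p" using lowblk[of i] lowblk[of j] ij(4) by simp
    hence "(i < p \<and> j < p) \<or> (\<not> i < p \<and> \<not> j < p)" by blast
    then consider "i < p" "j < p" | "\<not> i < p" "\<not> j < p" by blast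
    thus ?thesis
    proof cases
      case 1 thus ?thesis using ij g unfolding f'_def goodp_def by auto
    next
      case 2
      have "i - p < s" "j - p < s" using 2 ij by auto
      hence "f' i \<in> B" "f' j \<in> B" using 2 hB unfolding f'_def by auto
      moreover have "f' i \<noteq> f' j" using inj ij unfolding inj_on_def by auto
      ultimately show ?thesis using B(3) unfolding clq_def by auto
    qed
  qed
  have "goodp n E s (p + s) f'"
    unfolding goodp_def using g inj img B(1) edges unfolding goodp_def by auto
  thus ?thesis using img by blast
qed

lemma phase1:
  assumes sg: "simple_graph n E" and s: "s > 0"
  shows "finite S \<Longrightarrow> goodp n E s p0 f0 \<Longrightarrow> p0 + s * card S \<le> P \<Longrightarrow>
    (\<forall>u\<in>S. u < n \<and> (\<forall>U. U \<subseteq> {..<n} \<longrightarrow> card U \<le> P \<longrightarrow> u \<notin> U \<longrightarrow>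
         (\<exists>Q. Q \<subseteq> nb n E u \<and> card Q = s - 1 \<and> clq E Q \<and> Q \<inter> U = {}))) \<Longrightarrow>
    \<exists>p f. goodp n E s p f \<and> S \<subseteq> f ` {..<p} \<and> f0 ` {..<p0} \<subseteq> f ` {..<p} \<and> p \<le> p0 + s * card S"
proof (induction S rule: finite_induct)
  case empty
  thus ?case by auto
next
  case (insert x S)
  have "p0 + s * card S \<le> P" using insert.prems(2) insert.hyps by simp
  then obtain p f where pf: "goodp n E s p f" "S \<subseteq> f ` {..<p}" "f0 ` {..<p0} \<subseteq> f ` {..<p}"
      "p \<le> p0 + s * card S"
    using insert.IH insert.prems by auto
  show ?case
  proof (cases "x \<in> f ` {..<p}")
    case True
    thus ?thesis using pf insert.hyps by (intro exI[of _ p] exI[of _ f]) auto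
  next
    case False
    let ?U = "f ` {..<p}"
    have U: "?U \<subseteq> {..<n}" using pf(1) unfolding goodp_def by auto
    have cU: "card ?U = p" using pf(1) unfolding goodp_def by (simp add: card_image)
    have "card ?U \<le> P" using cU pf(4) insert.prems(2) insert.hyps by simp
    have hx: "x < n \<and> (\<forall>U. U \<subseteq> {..<n} \<longrightarrow> card U \<le> P \<longrightarrow> x \<notin> U \<longrightarrow>
         (\<exists>Q. Q \<subseteq> nb n E x \<and> card Q = s - 1 \<and> clq E Q \<and> Q \<inter> U = {}))"
      using insert.prems(3) by simp
    hence x: "x < n" by simp
    have H: "\<And>U. U \<subseteq> {..<n} \<Longrightarrow> card U \<le> P \<Longrightarrow> x \<notin> U \<Longrightarrow>
         (\<exists>Q. Q \<subseteq> nb n E x \<and> card Q = s - 1 \<and> clq E Q \<and> Q \<inter> U = {})"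
      using hx by blast
    obtain Q where Q: "Q \<subseteq> nb n E x" "card Q = s - 1" "clq E Q" "Q \<inter> ?U = {}"
      using H[OF U \<open>card ?U \<le> P\<close> False] by blast
    have irr: "\<not> E a a" for a using sg unfolding simple_graph_def by blast
    have xQ: "x \<notin> Q" using Q(1) irr unfolding nb_def by auto
    have finQ: "finite Q" using Q(1) finite_subset[of Q "nb n E x"] by simp
    have B: "insert x Q \<subseteq> {..<n}" "card (insert x Q) = s" "clq E (insert x Q)" "insert x Q \<inter> ?U = {}"
    proof -
      show "insert x Q \<subseteq> {..<n}" using Q(1) x unfolding nb_def by auto
      show "card (insert x Q) = s" using xQ finQ Q(2) s by simp
      show "clq E (insert x Q)" using Q(1,3) simple_sym[OF sg] unfolding clq_def nb_def by auto
      show "insert x Q \<inter> ?U = {}" using Q(4) False by auto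
    qed
    obtain f' where f': "goodp n E s (p + s) f'" "f' ` {..<p+s} = ?U \<union> insert x Q"
      using goodp_step[OF pf(1) s B] by blast
    show ?thesis
      by (rule exI[of _ "p + s"], rule exI[of _ f']) (use f' pf insert.hyps in auto)
  qed
qed

definition Bad :: "nat \<Rightarrow> (nat \<Rightarrow> nat \<Rightarrow> bool) \<Rightarrow> nat \<Rightarrow> (nat \<Rightarrow> nat) \<Rightarrow> (nat \<times> nat) set" where
  "Bad n E s \<sigma> = {(i, j). i < n \<and> j < n \<and> i \<noteq> j \<and> i div s = j div s \<and> \<not> E (\<sigma> i) (\<sigma> j)}"

lemma finite_Bad: "finite (Bad n E s \<sigma>)"
proof -
  have "Bad n E s \<sigma> \<subseteq> {..<n} \<times> {..<n}" unfolding Bad_def by auto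
  thus ?thesis by (rule finite_subset) simp
qed

lemma block_card:
  assumes "s > 0"
  shows "card {j. j < n \<and> j div s = c} \<le> s"
proof -
  have "{j. j < n \<and> j div s = c} \<subseteq> {c*s..<c*s+s}"
  proof
    fix j assume "j \<in> {j. j < n \<and> j div s = c}"
    hence "j div s = c" by simp
    moreover have "j div s * s + j mod s = j" by (rule div_mult_mod_eq)
    moreover have "j mod s < s" using assms by simp
    ultimately show "j \<in> {c*s..<c*s+s}" by auto
  qed
  hence "card {j. j < n \<and> j div s = c} \<le> card {c*s..<c*s+s}" by (rule card_mono[rotated]) simp
  thus ?thesis by simp
qed

lemma card_preimage:
  assumes "inj_on \<sigma> {..<n}" "finite A"
  shows "card {i. i < n \<and> \<sigma> i \<in> A} \<le> card A"
proof (rule card_inj_on_le[OF _ _ assms(2)])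
  show "inj_on \<sigma> {i. i < n \<and> \<sigma> i \<in> A}" using assms(1) by (rule inj_on_subset) auto
qed auto

lemma bij_swap_upd:
  assumes "bij_betw \<sigma> A B" "q \<in> A" "q' \<in> A"
  shows "bij_betw (\<sigma>(q := \<sigma> q', q' := \<sigma> q)) A B"
proof (rule bij_betw_imageI)
  have inj: "inj_on \<sigma> A" using assms(1) unfolding bij_betw_def by simp
  show "inj_on (\<sigma>(q := \<sigma> q', q' := \<sigma> q)) A"
    using inj assms(2,3) unfolding inj_on_def by (auto split: if_splits)
  have "(\<sigma>(q := \<sigma> q', q' := \<sigma> q)) ` A = \<sigma> ` A"
  proof
    show "(\<sigma>(q := \<sigma> q', q' := \<sigma> q)) ` A \<subseteq> \<sigma> ` A" using assms(2,3) by auto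
    show "\<sigma> ` A \<subseteq> (\<sigma>(q := \<sigma> q', q' := \<sigma> q)) ` A"
    proof
      fix y assume "y \<in> \<sigma> ` A"
      then obtain x where x: "x \<in> A" "y = \<sigma> x" by auto
      show "y \<in> (\<sigma>(q := \<sigma> q', q' := \<sigma> q)) ` A"
      proof (cases "x = q \<or> x = q'")
        case True
        thus ?thesis
        proof
          assume "x = q"
          hence "(\<sigma>(q := \<sigma> q', q' := \<sigma> q)) q' = y" using x by simp
          thus ?thesis using assms(3) by (metis image_eqI)
        next
          assume xq: "x = q'"
          show ?thesis
          proof (cases "q = q'")
            case True thus ?thesis using x xq by (metis fun_upd_same image_eqI)
          next
            case False
            hence "(\<sigma>(q := \<sigma> q', q' := \<sigma> q)) q = y" using x xq by simp
            thus ?thesis using assms(2) by (metis image_eqI)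
          qed
        qed
      next
        case False
        hence "(\<sigma>(q := \<sigma> q', q' := \<sigma> q)) x = y" using x by simp
        thus ?thesis using x by (metis image_eqI)
      qed
    qed
  qed
  thus "(\<sigma>(q := \<sigma> q', q' := \<sigma> q)) ` A = B" using assms(1) unfolding bij_betw_def by simp
qed

lemma lowblk:
  fixes s c k :: nat
  assumes "s > 0"
  shows "k < s * c \<longleftrightarrow> k div s < c"
  using assms by (simp add: div_less_iff_less_mult mult.commute)

definition inv2 :: "nat \<Rightarrow> (nat \<Rightarrow> nat \<Rightarrow> bool) \<Rightarrow> nat \<Rightarrow> nat \<Rightarrow> nat \<Rightarrow> (nat \<Rightarrow> nat) \<Rightarrow> bool" where
  "inv2 n E s p D \<sigma> \<longleftrightarrow> bij_betw \<sigma> {..<n} {..<n} \<and>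
     (\<forall>i<p. \<forall>j<p. i \<noteq> j \<and> i div s = j div s \<longrightarrow> E (\<sigma> i) (\<sigma> j)) \<and>
     (\<forall>i. p \<le> i \<and> i < n \<longrightarrow> card (nn n E (\<sigma> i)) < D)"

lemma swap_step:
  assumes sg: "simple_graph n E" and s: "s > 0" and ps: "s dvd p" and pn: "p \<le> n"
    and cnt: "s + (s - 1) * (D - 1) + s * (D - 1) < n - p"
    and I: "inv2 n E s p D \<sigma>" and qq: "(q, q2) \<in> Bad n E s \<sigma>"
  shows "\<exists>\<sigma>'. inv2 n E s p D \<sigma>' \<and> card (Bad n E s \<sigma>') < card (Bad n E s \<sigma>)"
proof -
  have sym: "E x y = E y x" for x y using simple_sym[OF sg] .
  have bij: "bij_betw \<sigma> {..<n} {..<n}" and pre: "\<forall>i<p. \<forall>j<p. i \<noteq> j \<and> i div s = j div s \<longrightarrow> E (\<sigma> i) (\<sigma> j)"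
    and low: "\<forall>i. p \<le> i \<and> i < n \<longrightarrow> card (nn n E (\<sigma> i)) < D" using I unfolding inv2_def by auto
  have inj: "inj_on \<sigma> {..<n}" using bij unfolding bij_betw_def by simp
  have srng: "\<sigma> i < n" if "i < n" for i using bij that unfolding bij_betw_def by auto
  have sinj: "\<sigma> i = \<sigma> j \<longleftrightarrow> i = j" if "i < n" "j < n" for i j using inj that unfolding inj_on_def by auto
  obtain c where pc: "p = s * c" using ps by blast
  have q: "q < n" "q2 < n" "q \<noteq> q2" "q div s = q2 div s" "\<not> E (\<sigma> q) (\<sigma> q2)"
    using qq unfolding Bad_def by auto
  have blkp: "p \<le> j" if "j div s = q div s" for j
  proof (rule ccontr)
    assume "\<not> p \<le> j"
    hence "j div s < c" using lowblk[OF s, of j c] pc by simp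
    hence "q div s < c" "q2 div s < c" using that q(4) by simp_all
    hence "q < p" "q2 < p" using lowblk[OF s] pc by simp_all
    thus False using pre q by blast
  qed
  define u where "u = \<sigma> q"
  define X1 where "X1 = {j. j < n \<and> j div s = q div s}"
  define X2 where "X2 = (\<Union>j\<in>X1 - {q}. {i. i < n \<and> \<sigma> i \<in> nn n E (\<sigma> j)})"
  define J where "J = {j. j < n \<and> \<sigma> j \<in> nn n E u}"
  define X3 where "X3 = (\<Union>j\<in>J. {i. i < n \<and> i div s = j div s})"
  have finX1: "finite X1" unfolding X1_def by simp
  have qX1: "q \<in> X1" unfolding X1_def using q by simp
  have c1: "card X1 \<le> s" unfolding X1_def by (rule block_card[OF s])
  have c2: "card X2 \<le> (s - 1) * (D - 1)"
  proof -
    have "card X2 \<le> (\<Sum>j\<in>X1 - {q}. card {i. i < n \<and> \<sigma> i \<in> nn n E (\<sigma> j)})"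
      unfolding X2_def by (rule card_UN_le) (use finX1 in simp)
    also have "\<dots> \<le> (\<Sum>j\<in>X1 - {q}. D - 1)"
    proof (rule sum_mono)
      fix j assume j: "j \<in> X1 - {q}"
      have "card {i. i < n \<and> \<sigma> i \<in> nn n E (\<sigma> j)} \<le> card (nn n E (\<sigma> j))"
        by (rule card_preimage[OF inj]) simp
      also have "\<dots> < D" using low blkp j unfolding X1_def by auto
      finally show "card {i. i < n \<and> \<sigma> i \<in> nn n E (\<sigma> j)} \<le> D - 1" by simp
    qed
    also have "\<dots> = card (X1 - {q}) * (D - 1)" by simp
    also have "card (X1 - {q}) = card X1 - 1" using qX1 finX1 by simp
    finally show ?thesis using c1 by (meson le_trans diff_le_mono mult_le_mono1)
  qed
  have c3: "card X3 \<le> (D - 1) * s"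
  proof -
    have cJ: "card J \<le> D - 1"
    proof -
      have "card J \<le> card (nn n E u)" unfolding J_def by (rule card_preimage[OF inj]) simp
      also have "\<dots> < D" unfolding u_def using low blkp q by auto
      finally show ?thesis by simp
    qed
    have "card X3 \<le> (\<Sum>j\<in>J. card {i. i < n \<and> i div s = j div s})"
      unfolding X3_def by (rule card_UN_le) (simp add: J_def)
    also have "\<dots> \<le> (\<Sum>j\<in>J. s)" by (rule sum_mono) (rule block_card[OF s])
    also have "\<dots> = card J * s" by simp
    finally show ?thesis using cJ by (meson le_trans mult_le_mono1)
  qed
  have cX: "card (X1 \<union> X2 \<union> X3) < n - p"
  proof -
    have "card (X1 \<union> X2 \<union> X3) \<le> card X1 + card X2 + card X3"
      by (metis add_le_mono1 card_Un_le le_trans)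
    thus ?thesis using c1 c2 c3 cnt by (simp add: mult.commute)
  qed
  have "card ({p..<n} - (X1 \<union> X2 \<union> X3)) > 0"
  proof -
    have "card {p..<n} - card (X1 \<union> X2 \<union> X3) \<le> card ({p..<n} - (X1 \<union> X2 \<union> X3))"
    proof (rule diff_card_le_card_Diff)
      show "finite (X1 \<union> X2 \<union> X3)" by (rule finite_subset[of _ "{..<n}"]) (auto simp: X1_def X2_def X3_def)
    qed
    thus ?thesis using cX by simp
  qed
  then obtain q' where q': "q' \<in> {p..<n}" "q' \<notin> X1" "q' \<notin> X2" "q' \<notin> X3"
    by (metis Diff_iff Un_iff card_gt_0_iff ex_in_conv)
  have q'n: "q' < n" "p \<le> q'" using q'(1) by auto
  have bdiff: "q' div s \<noteq> q div s" using q'(2) q'n unfolding X1_def by auto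
  have qne: "q \<noteq> q'" using bdiff by auto
  have propb: "E (\<sigma> q') (\<sigma> j)" if j: "j < n" "j div s = q div s" "j \<noteq> q" for j
  proof -
    have "j \<in> X1 - {q}" using j unfolding X1_def by auto
    hence "\<sigma> q' \<notin> nn n E (\<sigma> j)" using q'(3) q'n unfolding X2_def by auto
    moreover have "\<sigma> q' \<noteq> \<sigma> j" using sinj[OF q'n(1) j(1)] bdiff j by auto
    ultimately have "E (\<sigma> j) (\<sigma> q')" using srng[OF q'n(1)] unfolding nn_def by auto
    thus ?thesis using sym by metis
  qed
  have propc: "E u (\<sigma> j)" if j: "j < n" "j div s = q' div s" "j \<noteq> q'" for j
  proof (rule ccontr)
    assume ne: "\<not> E u (\<sigma> j)"
    have "j \<noteq> q" using j bdiff by auto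
    hence "\<sigma> j \<noteq> u" unfolding u_def using sinj[OF j(1) q(1)] by simp
    hence "j \<in> J" using ne srng[OF j(1)] j(1) unfolding J_def nn_def by auto
    hence "q' \<in> X3" unfolding X3_def using q'n j(2) by (auto intro!: bexI[of _ j])
    thus False using q'(4) by simp
  qed
  define \<sigma>' where "\<sigma>' = \<sigma>(q := \<sigma> q', q' := \<sigma> q)"
  have s'q: "\<sigma>' q = \<sigma> q'" and s'q': "\<sigma>' q' = \<sigma> q" and s'o: "\<And>x. x \<noteq> q \<Longrightarrow> x \<noteq> q' \<Longrightarrow> \<sigma>' x = \<sigma> x"
    unfolding \<sigma>'_def using qne by auto
  have bij': "bij_betw \<sigma>' {..<n} {..<n}" unfolding \<sigma>'_def by (rule bij_swap_upd[OF bij]) (use q q'n in auto)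
  have qp: "p \<le> q" using blkp by simp
  have pre': "\<forall>i<p. \<forall>j<p. i \<noteq> j \<and> i div s = j div s \<longrightarrow> E (\<sigma>' i) (\<sigma>' j)"
    using pre s'o qp q'n by auto
  have low': "\<forall>i. p \<le> i \<and> i < n \<longrightarrow> card (nn n E (\<sigma>' i)) < D"
  proof (intro allI impI)
    fix i assume i: "p \<le> i \<and> i < n"
    show "card (nn n E (\<sigma>' i)) < D"
    proof (cases "i = q \<or> i = q'")
      case True thus ?thesis using low qp q q'n s'q s'q' by auto
    next
      case False thus ?thesis using low i s'o by auto
    qed
  qed
  have sub: "Bad n E s \<sigma>' \<subseteq> Bad n E s \<sigma> - {(q, q2)}"
  proof
    fix x assume x: "x \<in> Bad n E s \<sigma>'"
    then obtain i j where ij: "x = (i, j)" "i < n" "j < n" "i \<noteq> j" "i div s = j div s" "\<not> E (\<sigma>' i) (\<sigma>' j)"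
      unfolding Bad_def by auto
    have iq: "i \<noteq> q"
    proof
      assume "i = q"
      hence "j \<noteq> q'" using ij bdiff by auto
      thus False using propb[of j] ij \<open>i = q\<close> s'q s'o by auto
    qed
    have iq': "i \<noteq> q'"
    proof
      assume "i = q'"
      hence "j \<noteq> q" using ij bdiff by auto
      thus False using propc[of j] ij \<open>i = q'\<close> s'q' s'o unfolding u_def by auto
    qed
    have jq: "j \<noteq> q"
    proof
      assume "j = q"
      hence "i \<noteq> q'" using ij bdiff by auto
      hence "E (\<sigma> q') (\<sigma> i)" using propb[of i] ij \<open>j = q\<close> by auto
      thus False using ij \<open>j = q\<close> s'q s'o iq \<open>i \<noteq> q'\<close> sym by metis
    qed
    have jq': "j \<noteq> q'"
    proof
      assume "j = q'"
      hence "E u (\<sigma> i)" using propc[of i] ij iq' by auto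
      thus False using ij \<open>j = q'\<close> s'q' s'o iq iq' sym unfolding u_def by metis
    qed
    show "x \<in> Bad n E s \<sigma> - {(q, q2)}" using ij iq iq' jq jq' s'o unfolding Bad_def by auto
  qed
  have "card (Bad n E s \<sigma>') < card (Bad n E s \<sigma>)"
  proof -
    have "card (Bad n E s \<sigma>') \<le> card (Bad n E s \<sigma> - {(q, q2)})" by (rule card_mono) (use sub finite_Bad in auto)
    also have "\<dots> < card (Bad n E s \<sigma>)" by (rule card_Diff1_less[OF finite_Bad qq])
    finally show ?thesis .
  qed
  moreover have "inv2 n E s p D \<sigma>'" unfolding inv2_def using bij' pre' low' by blast
  ultimately show ?thesis by blast
qed

lemma phase2:
  assumes sg: "simple_graph n E" and s: "s > 0" and ps: "s dvd p" and pn: "p \<le> n"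
    and cnt: "s + (s - 1) * (D - 1) + s * (D - 1) < n - p"
  shows "inv2 n E s p D \<sigma> \<Longrightarrow> \<exists>\<sigma>'. bij_betw \<sigma>' {..<n} {..<n} \<and> Bad n E s \<sigma>' = {}"
proof (induction "card (Bad n E s \<sigma>)" arbitrary: \<sigma> rule: less_induct)
  case less
  show ?case
  proof (cases "Bad n E s \<sigma> = {}")
    case True thus ?thesis using less.prems unfolding inv2_def by blast
  next
    case False
    then obtain q q2 where qq: "(q, q2) \<in> Bad n E s \<sigma>" by auto
    obtain \<sigma>' where "inv2 n E s p D \<sigma>'" "card (Bad n E s \<sigma>') < card (Bad n E s \<sigma>)"
      using swap_step[OF sg s ps pn cnt less.prems qq] by blast
    thus ?thesis using less.hyps by blast
  qed
qed

lemma extend_prefix: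
  assumes g: "goodp n E s p f" and pn: "p \<le> n"
  shows "\<exists>\<sigma>. bij_betw \<sigma> {..<n} {..<n} \<and> (\<forall>i<p. \<sigma> i = f i)"
proof -
  have inj: "inj_on f {..<p}" and im: "f ` {..<p} \<subseteq> {..<n}" using g unfolding goodp_def by auto
  have c1: "card ({..<n} - f ` {..<p}) = n - p" using card_Diff_subset[OF _ im] inj by (simp add: card_image)
  obtain g where gb: "bij_betw g {p..<n} ({..<n} - f ` {..<p})"
    using finite_same_card_bij[of "{p..<n}" "{..<n} - f ` {..<p}"] c1 by auto
  define \<sigma> where "\<sigma> i = (if i < p then f i else g i)" for i
  have b1: "bij_betw \<sigma> {..<p} (f ` {..<p})"
  proof -
    have "bij_betw \<sigma> {..<p} (f ` {..<p}) = bij_betw f {..<p} (f ` {..<p})"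
      by (rule bij_betw_cong) (auto simp: \<sigma>_def)
    thus ?thesis using inj by (simp add: bij_betw_imageI)
  qed
  have b2: "bij_betw \<sigma> {p..<n} ({..<n} - f ` {..<p})"
  proof -
    have "bij_betw \<sigma> {p..<n} ({..<n} - f ` {..<p}) = bij_betw g {p..<n} ({..<n} - f ` {..<p})"
      by (rule bij_betw_cong) (auto simp: \<sigma>_def)
    thus ?thesis using gb by simp
  qed
  have "bij_betw \<sigma> ({..<p} \<union> {p..<n}) (f ` {..<p} \<union> ({..<n} - f ` {..<p}))"
    by (rule bij_betw_combine[OF b1 b2]) auto
  moreover have "{..<p} \<union> {p..<n} = {..<n}" using pn by auto
  moreover have "f ` {..<p} \<union> ({..<n} - f ` {..<p}) = {..<n}" using im by auto
  ultimately have "bij_betw \<sigma> {..<n} {..<n}" by simp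
  thus ?thesis unfolding \<sigma>_def by auto
qed

lemma bad_empty_contains:
  assumes b: "bij_betw \<sigma> {..<n} {..<n}" and B: "Bad n E s \<sigma> = {}" and ks: "k * s = n"
  shows "contains_subgraph n E n (disjoint_cliques k s)"
  unfolding contains_subgraph_def
proof (intro exI[of _ \<sigma>] conjI allI impI)
  show "inj_on \<sigma> {..<n}" using b unfolding bij_betw_def by simp
  show "\<sigma> ` {..<n} \<subseteq> {..<n}" using b unfolding bij_betw_def by simp
  fix i j assume "i < n" "j < n" "disjoint_cliques k s i j"
  thus "E (\<sigma> i) (\<sigma> j)" using B unfolding Bad_def disjoint_cliques_def by auto
qed

lemma comb:
  assumes sg: "simple_graph n E" and s2: "s \<ge> 2" and sn: "s dvd n" and D1: "D \<ge> 1"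
    and Ldef: "L = {v. v < n \<and> \<not> card (nn n E v) < D}"
    and TL: "T \<subseteq> L" and T1: "card T \<le> 1" and finT: "finite T"
    and TK: "\<forall>t\<in>T. hasKr n E (s - 1) t"
    and LT: "\<forall>v\<in>L - T. 4 * deg n E v \<ge> n"
    and num1: "4 * ((s - 2) * D + 1 + card L + (s + s * card L)) \<le> n"
    and num2: "s + (s - 1) * (D - 1) + s * (D - 1) + (s + s * card L) < n"
  shows "contains_subgraph n E n (disjoint_cliques (n div s) s)"
proof -
  have s: "s > 0" using s2 by simp
  have sym: "E x y = E y x" for x y using simple_sym[OF sg] .
  have irr: "\<not> E x x" for x using sg unfolding simple_graph_def by blast
  have finL: "finite L" unfolding Ldef by simp
  define P where "P = s + s * card L"
  obtain p0 f0 where pf0: "goodp n E s p0 f0" "T \<subseteq> f0 ` {..<p0}" "p0 \<le> s"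
  proof (cases "T = {}")
    case True
    have "goodp n E s 0 id" unfolding goodp_def by simp
    thus ?thesis using that True by blast
  next
    case False
    then obtain t where tT: "t \<in> T" by blast
    have "\<forall>a1\<in>T. \<forall>a2\<in>T. a1 = a2" using card_le_Suc0_iff_eq[OF finT] T1 by simp
    hence "T = {t}" using tT by auto
    obtain Q where Q: "Q \<subseteq> nb n E t" "card Q = s - 1" "clq E Q"
      using TK tT unfolding hasKr_def clq_def by blast
    have tn: "t < n" using tT TL unfolding Ldef by auto
    have tQ: "t \<notin> Q" using Q(1) irr unfolding nb_def by auto
    have finQ: "finite Q" using Q(1) finite_subset[of Q "nb n E t"] by simp
    have g0: "goodp n E s 0 id" unfolding goodp_def by simp
    have B: "insert t Q \<subseteq> {..<n}" "card (insert t Q) = s" "clq E (insert t Q)" "insert t Q \<inter> id ` {..<0} = {}"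
      using Q tn tQ finQ s sym unfolding nb_def clq_def by auto
    obtain f' where "goodp n E s (0 + s) f'" "f' ` {..<0+s} = id ` {..<0} \<union> insert t Q"
      using goodp_step[OF g0 s B] by blast
    thus ?thesis using that[of s f'] \<open>T = {t}\<close> by auto
  qed
  have hyp: "\<forall>u\<in>L - T. u < n \<and> (\<forall>U. U \<subseteq> {..<n} \<longrightarrow> card U \<le> P \<longrightarrow> u \<notin> U \<longrightarrow>
         (\<exists>Q. Q \<subseteq> nb n E u \<and> card Q = s - 1 \<and> clq E Q \<and> Q \<inter> U = {}))"
  proof (intro ballI conjI allI impI)
    fix u assume u: "u \<in> L - T"
    show "u < n" using u unfolding Ldef by auto
    fix U assume U: "U \<subseteq> {..<n}" "card U \<le> P" "u \<notin> U"
    define W where "W = nb n E u - U - L"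
    have finW: "finite W" unfolding W_def by simp
    have dg: "4 * deg n E u \<ge> n" using LT u by blast
    have "card (nb n E u) - card U - card L \<le> card W"
    proof -
      have finU: "finite U" using U(1) finite_subset by blast
      have "card (nb n E u) - card U \<le> card (nb n E u - U)" by (rule diff_card_le_card_Diff[OF finU])
      moreover have "card (nb n E u - U) - card L \<le> card W" unfolding W_def by (rule diff_card_le_card_Diff[OF finL])
      ultimately show ?thesis by linarith
    qed
    moreover
    define A where "A = (s - 2) * D + 1 + card L + P"
    have "4 * A \<le> n" using num1 unfolding A_def P_def .
    hence "A \<le> card (nb n E u)" using dg unfolding deg_def by linarith
    ultimately have cW: "card W \<ge> (s - 2) * D + 1" using U(2) unfolding A_def by linarith
    have few: "\<forall>w\<in>W. card {x\<in>W. x \<noteq> w \<and> \<not> E w x} < D"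
    proof
      fix w assume w: "w \<in> W"
      have "card {x\<in>W. x \<noteq> w \<and> \<not> E w x} \<le> card (nn n E w)"
        by (rule card_mono) (auto simp: nn_def W_def nb_def)
      also have "\<dots> < D" using w unfolding W_def Ldef nb_def by auto
      finally show "card {x\<in>W. x \<noteq> w \<and> \<not> E w x} < D" .
    qed
    have big: "(s - 1) * D < card W + D"
    proof -
      have "s - 1 = (s - 2) + 1" using s2 by simp
      hence "(s - 1) * D = (s - 2) * D + D" by (simp add: algebra_simps)
      thus ?thesis using cW by linarith
    qed
    obtain Q where Q: "Q \<subseteq> W" "card Q = s - 1" "clq E Q"
      using greedy_clique[OF sym finW few big] by blast
    have "Q \<subseteq> nb n E u" "Q \<inter> U = {}" using Q(1) unfolding W_def by auto
    thus "\<exists>Q. Q \<subseteq> nb n E u \<and> card Q = s - 1 \<and> clq E Q \<and> Q \<inter> U = {}"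
      using Q by blast
  qed
  have finS: "finite (L - T)" using finL by simp
  have "card (L - T) \<le> card L" by (rule card_mono[OF finL]) auto
  hence "s * card (L - T) \<le> s * card L" by simp
  hence "p0 + s * card (L - T) \<le> P" unfolding P_def using pf0(3) by linarith
  then obtain p f where pf: "goodp n E s p f" "L - T \<subseteq> f ` {..<p}" "f0 ` {..<p0} \<subseteq> f ` {..<p}"
      "p \<le> p0 + s * card (L - T)"
    using phase1[OF sg s finS pf0(1) _ hyp] by blast
  have pP: "p \<le> P" using pf(4) \<open>p0 + s * card (L - T) \<le> P\<close> by simp
  have Lsub: "L \<subseteq> f ` {..<p}" using pf(2,3) pf0(2) by blast
  have inj: "inj_on f {..<p}" and im: "f ` {..<p} \<subseteq> {..<n}" using pf(1) unfolding goodp_def by auto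
  have pn: "p \<le> n" using card_mono[OF _ im] inj by (simp add: card_image)
  obtain \<sigma> where sb: "bij_betw \<sigma> {..<n} {..<n}" "\<forall>i<p. \<sigma> i = f i" using extend_prefix[OF pf(1) pn] by blast
  have I: "inv2 n E s p D \<sigma>"
    unfolding inv2_def
  proof (intro conjI allI impI)
    show "bij_betw \<sigma> {..<n} {..<n}" by (rule sb(1))
    fix i j assume "i < p" "j < p" "i \<noteq> j \<and> i div s = j div s"
    thus "E (\<sigma> i) (\<sigma> j)" using pf(1) sb(2) unfolding goodp_def by auto
  next
    fix i assume i: "p \<le> i \<and> i < n"
    have sinj: "inj_on \<sigma> {..<n}" using sb(1) unfolding bij_betw_def by simp
    have "\<sigma> i \<notin> f ` {..<p}"
    proof
      assume "\<sigma> i \<in> f ` {..<p}"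
      then obtain k where k: "k < p" "\<sigma> i = f k" by auto
      hence "\<sigma> i = \<sigma> k" using sb(2) by simp
      hence "i = k" using sinj i k pn unfolding inj_on_def by auto
      thus False using i k by simp
    qed
    hence "\<sigma> i \<notin> L" using Lsub by blast
    moreover have "\<sigma> i < n" using sb(1) i unfolding bij_betw_def by auto
    ultimately show "card (nn n E (\<sigma> i)) < D" unfolding Ldef by auto
  qed
  have cnt: "s + (s - 1) * (D - 1) + s * (D - 1) < n - p" using num2 pP unfolding P_def by linarith
  have ps: "s dvd p" using pf(1) unfolding goodp_def by simp
  obtain \<sigma>' where "bij_betw \<sigma>' {..<n} {..<n}" "Bad n E s \<sigma>' = {}"
    using phase2[OF sg s ps pn cnt I] by blast
  moreover have "n div s * s = n" using sn by simp
  ultimately show ?thesis by (rule bad_empty_contains)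
qed

lemma L_char:
  assumes sg: "simple_graph n E"
  shows "{v. v < n \<and> \<not> card (nn n E v) < D} = {v. v < n \<and> deg n E v + D \<le> n - 1}"
  using deg_nn[OF sg] by fastforce

lemma lin1:
  fixes X Z Y W l s n :: nat
  shows "X \<le> Z \<Longrightarrow> Y \<le> 16*W \<Longrightarrow> l < 16*s \<Longrightarrow> 8*Z \<le> n \<Longrightarrow> 2*s \<le> W \<Longrightarrow> 400*W \<le> n \<Longrightarrow> 4 \<le> W
    \<Longrightarrow> 4*(X + 1 + l + (s + Y)) \<le> n"
  by (simp add: algebra_simps)

lemma lin2:
  fixes A B Z Y W l s n :: nat
  shows "A \<le> Z \<Longrightarrow> B \<le> Z \<Longrightarrow> Y \<le> 16*W \<Longrightarrow> l < 16*s \<Longrightarrow> 8*Z \<le> n \<Longrightarrow> 2*s \<le> W \<Longrightarrow> 400*W \<le> n \<Longrightarrow> 4 \<le> W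
    \<Longrightarrow> s + A + B + (s + Y) < n"
  by (simp add: algebra_simps)

lemma numD:
  fixes s n D :: nat
  assumes s2: "s \<ge> 2" and n: "n \<ge> 400 * s * s" and Dd: "D = n div (8 * s)"
  shows "D \<ge> 50 * s"
proof (rule ccontr)
  have N2: "n < (n div (8*s) + 1) * (8*s)"
  proof -
    have "n = n div (8*s) * (8*s) + n mod (8*s)" by (rule div_mult_mod_eq[symmetric])
    moreover have "n mod (8*s) < 8*s" using s2 by simp
    ultimately show ?thesis by (simp add: algebra_simps)
  qed
  assume "\<not> D \<ge> 50 * s"
  hence "D + 1 \<le> 50 * s" by simp
  hence "(D + 1) * (8 * s) \<le> 50 * s * (8 * s)" by (rule mult_le_mono1)
  hence "n < 400 * s * s" using N2 Dd by (simp add: algebra_simps)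
  thus False using n by simp
qed

lemma numerics:
  fixes s n D l :: nat
  assumes s2: "s \<ge> 2" and n: "n \<ge> 400 * s * s" and Dd: "D = n div (8 * s)"
    and lD: "l * (D - 1) \<le> n - 2"
  shows "D \<ge> 2" "16 * D \<le> n" "4 * ((s - 2) * D + 1 + l + (s + s * l)) \<le> n"
    "s + (s - 1) * (D - 1) + s * (D - 1) + (s + s * l) < n"
proof -
  have N1: "n div (8*s) * (8*s) \<le> n" by (rule div_times_less_eq_dividend)
  have N2: "n < (n div (8*s) + 1) * (8*s)"
  proof -
    have "n = n div (8*s) * (8*s) + n mod (8*s)" by (rule div_mult_mod_eq[symmetric])
    moreover have "n mod (8*s) < 8*s" using s2 by simp
    ultimately show ?thesis by (simp add: algebra_simps)
  qed
  have sD: "8 * (s * D) \<le> n" using N1 Dd by (simp add: algebra_simps)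
  have ss: "s * s \<ge> 2 * s" using s2 by simp
  have D50: "D \<ge> 50 * s" by (rule numD[OF s2 n Dd])
  show D2: "D \<ge> 2" using D50 s2 by simp
  have "16 * D \<le> 8 * (s * D)" using s2 by simp
  thus "16 * D \<le> n" using sD by linarith
  have l16: "l < 16 * s"
  proof (rule ccontr)
    assume "\<not> l < 16 * s"
    hence "16 * s * (D - 1) \<le> l * (D - 1)" by (intro mult_le_mono1) simp
    hence "16 * s * (D - 1) \<le> n - 2" using lD by linarith
    moreover have "(D + 1) * (8 * s) \<le> 16 * s * (D - 1)"
    proof -
      have "D + 1 \<le> 2 * (D - 1)" using D2 D50 s2 by simp
      hence "(D + 1) * (8 * s) \<le> 2 * (D - 1) * (8 * s)" by (rule mult_le_mono1)
      thus ?thesis by (simp add: algebra_simps)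
    qed
    ultimately show False using N2 Dd by simp
  qed
  have sl: "s * l \<le> 16 * (s * s)" using l16 by simp
  have n': "400 * (s * s) \<le> n" using n by (simp add: mult.assoc)
  have ss4: "s * s \<ge> 4" using mult_le_mono[OF s2 s2] by simp
  have a1: "(s - 2) * D \<le> s * D" by simp
  have a2: "(s - 1) * (D - 1) \<le> s * D" by (simp add: mult_le_mono)
  have a3: "s * (D - 1) \<le> s * D" by simp
  show "4 * ((s - 2) * D + 1 + l + (s + s * l)) \<le> n"
    by (rule lin1[OF a1 sl l16 sD ss n' ss4])
  show "s + (s - 1) * (D - 1) + s * (D - 1) + (s + s * l) < n"
    by (rule lin2[OF a2 a3 sl l16 sD ss n' ss4])
qed

lemma main_key:
  fixes r n :: nat
  assumes r1: "r \<ge> 1" and n: "n \<ge> 400 * (r+1) * (r+1)" and dv: "(r+1) dvd n"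
    and sg: "simple_graph n G"
    and nc: "\<not> contains_subgraph n G n (disjoint_cliques (n div (r + 1)) (r + 1))"
    and ge: "lambda_max n (H_graph n r) \<le> lambda_max n G"
  shows "graph_iso n G (H_graph n r)"
proof -
  define s where "s = r + 1"
  have s2: "s \<ge> 2" using r1 unfolding s_def by simp
  have ns: "n \<ge> 400 * s * s" using n unfolding s_def .
  have ss4: "s * s \<ge> 4" using s2 mult_le_mono[OF s2 s2] by simp
  have sss: "s * s \<ge> s" using s2 by simp
  have n800: "n \<ge> 1600" using ns ss4 by linarith
  have npos: "n > 0" using n800 by simp
  have evG: "eigenvalue (adj_mat n G) (lambda_max n G)" using lambda_max_props(1)[OF sg npos] .
  have n2: "n \<ge> r + 2" using ns sss unfolding s_def by linarith
  have lH: "real n - 2 \<le> lambda_max n (H_graph n r)" by (rule lambda_H_ge[OF r1 n2])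
  have mu: "real n - 2 \<le> lambda_max n G" using lH ge by simp
  have n6: "n \<ge> 6" using n800 by simp
  note U1 = lemmaU(1)[OF sg evG mu n6]
  note U2 = lemmaU(2)[OF sg evG mu n6]
  define D where "D = n div (8 * s)"
  define L where "L = {v. v < n \<and> \<not> card (nn n G v) < D}"
  have LL: "L = {v. v < n \<and> deg n G v + D \<le> n - 1}" unfolding L_def by (rule L_char[OF sg])
  have lD: "card L * (D - 1) \<le> n - 2"
  proof -
    have "D \<ge> 2" using numD[OF s2 ns D_def] s2 by linarith
    thus ?thesis using U2 unfolding LL by blast
  qed
  note num = numerics[OF s2 ns D_def lD]
  have big: "n > 2*r*(r+1) + 2*r + 7"
  proof -
    have "2*r*(r+1) + 2*r + 7 < 400 * (r+1) * (r+1)" by (simp add: algebra_simps)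
    thus ?thesis using n by linarith
  qed
  show ?thesis
  proof (cases "\<exists>t<n. 4 * deg n G t < n \<and> \<not> hasKr n G r t")
    case True
    then obtain t where t: "t < n" "4 * deg n G t < n" "\<not> hasKr n G r t" by blast
    show ?thesis by (rule SL[OF sg t(1) r1 big t(2) t(3) evG ge])
  next
    case False
    define T where "T = {t. t < n \<and> 4 * deg n G t < n}"
    have finT: "finite T" unfolding T_def by simp
    have T1: "card T \<le> 1"
    proof -
      have "\<forall>a1\<in>T. \<forall>a2\<in>T. a1 = a2" using U1 unfolding T_def by blast
      thus ?thesis using card_le_Suc0_iff_eq[OF finT] by simp
    qed
    have TL: "T \<subseteq> L"
    proof
      fix t assume "t \<in> T"
      hence t: "t < n" "4 * deg n G t < n" unfolding T_def by auto
      have "deg n G t + D \<le> n - 1" using t(2) num(2) by linarith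
      thus "t \<in> L" unfolding LL using t by simp
    qed
    have TK: "\<forall>t\<in>T. hasKr n G (s - 1) t" using False unfolding T_def s_def by auto
    have LT: "\<forall>v\<in>L - T. 4 * deg n G v \<ge> n" unfolding T_def L_def by auto
    have sn: "s dvd n" using dv unfolding s_def .
    have D1: "D \<ge> 1" using num(1) by simp
    have "contains_subgraph n G n (disjoint_cliques (n div s) s)"
      by (rule comb[OF sg s2 sn D1 L_def TL T1 finT TK LT num(3) num(4)])
    thus ?thesis using nc unfolding s_def by simp
  qed
qed

theorem theorem5p5:
  fixes r :: nat
  assumes "r \<ge> 1"
  shows "\<exists>n0. \<forall>n \<ge> n0. (r + 1) dvd n \<longrightarrow>
     (\<forall>G. simple_graph n G \<and>
          \<not> contains_subgraph n G n (disjoint_cliques (n div (r + 1)) (r + 1)) \<longrightarrow>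
          lambda_max n G \<le> lambda_max n (H_graph n r) \<and>
          (lambda_max n G = lambda_max n (H_graph n r) \<longleftrightarrow> graph_iso n G (H_graph n r)))"
proof (intro exI[of _ "400 * (r+1) * (r+1)"] allI impI conjI)
  fix n G
  assume n: "400 * (r+1) * (r+1) \<le> n" and dv: "(r + 1) dvd n"
    and GG: "simple_graph n G \<and> \<not> contains_subgraph n G n (disjoint_cliques (n div (r + 1)) (r + 1))"
  have key: "lambda_max n (H_graph n r) \<le> lambda_max n G \<Longrightarrow> graph_iso n G (H_graph n r)"
    using main_key[OF assms n dv] GG by simp
  show "lambda_max n G \<le> lambda_max n (H_graph n r)"
  proof (rule ccontr)
    assume nle: "\<not> lambda_max n G \<le> lambda_max n (H_graph n r)"
    hence "lambda_max n (H_graph n r) \<le> lambda_max n G" by simp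
    hence "graph_iso n G (H_graph n r)" by (rule key)
    hence "lambda_max n G = lambda_max n (H_graph n r)" by (rule iso_lambda)
    thus False using nle by simp
  qed
  show "lambda_max n G = lambda_max n (H_graph n r) \<longleftrightarrow> graph_iso n G (H_graph n r)"
  proof
    assume "lambda_max n G = lambda_max n (H_graph n r)"
    hence "lambda_max n (H_graph n r) \<le> lambda_max n G" by simp
    thus "graph_iso n G (H_graph n r)" by (rule key)
  next
    assume "graph_iso n G (H_graph n r)"
    thus "lambda_max n G = lambda_max n (H_graph n r)" by (rule iso_lambda)
  qed
qed


end
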